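(* For $n\ge1$, the height one prime ideals of $\mathbb{S}_n$ are exactly $\mathfrak p_1,\dots,\mathfrak p_n$. These are $n$ pairwise distinct and pairwise incomparable primes, and $\mathfrak p_1\cap\cdots\cap\mathfrak p_n=\mathfrak p_1\cdots\mathfrak p_n=F(1)\otimes\cdots\otimes F(n)$.
   Context: $K$ is a field. $\mathbb{S}_n$ is the $K$-algebra generated by $x_1,\dots,x_n,y_1,\dots,y_n$ subject to the defining relations $y_ix_i=1$ for all $i$, and $[x_i,y_j]=[x_i,x_j]=[y_i,y_j]=0$ for all $i\ne j$. For each $i$, $\mathbb{S}_1(i)$ is the subalgebra generated by $x_i,y_i$, and $\mathbb{S}_n=\mathbb{S}_1(1)\otimes\cdots\otimes\mathbb{S}_1(n)$. $F(i)=\bigoplus_{k,l\in\mathbb N}K(x_i^ky_i^l-x_i^{k+1}y_i^{l+1})$ is an ideal of $\mathbb{S}_1(i)$. Define $\mathfrak p_i=\mathbb{S}_1(1)\otimes\cdots\otimes\mathbb{S}_1(i-1)\otimes F(i)\otimes\mathbb{S}_1(i+1)\otimes\cdots\otimes\mathbb{S}_1(n)$; then $\mathbb{S}_n/\mathfrak p_i\cong\big(\bigotimes_{j\ne i}\mathbb{S}_1(j)\big)\otimes K[x_i,x_i^{-1}]$. The height of a prime is the supremum of lengths of strictly descending chains of primes starting from it. *)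

theory Defs
  imports Main "HOL-Library.Extended_Nat"
begin

text \<open>Concrete model of the Jacobson algebra S_n over a field 'k.
  A monomial x^alpha y^beta (alpha, beta in N^n) is a pair of functions nat => nat
  vanishing outside {0..<n}; variable indices are 0..n-1 (paper: 1..n).
  Since y_i x_i = 1, the words x^alpha y^beta form a K-basis of S_n, and
  (x^a y^b)(x^c y^d) = x^(a + (c - b)) y^(d + (b - c)) componentwise (truncated subtraction).\<close>

type_synonym monom = "(nat \<Rightarrow> nat) \<times> (nat \<Rightarrow> nat)"

definition monset :: "nat \<Rightarrow> monom set" where
  "monset n = {(a, b). \<forall>i\<ge>n. a i = 0 \<and> b i = 0}"

definition mmul :: "monom \<Rightarrow> monom \<Rightarrow> monom" where
  "mmul p q = ((\<lambda>i. fst p i + (fst q i - snd p i)), (\<lambda>i. snd q i + (snd p i - fst q i)))"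

definition Sn :: "nat \<Rightarrow> (monom \<Rightarrow> 'k::field) set" where
  "Sn n = {f. finite {m. f m \<noteq> 0} \<and> (\<forall>m. f m \<noteq> 0 \<longrightarrow> m \<in> monset n)}"

definition Smult :: "(monom \<Rightarrow> 'k::field) \<Rightarrow> (monom \<Rightarrow> 'k) \<Rightarrow> (monom \<Rightarrow> 'k)" where
  "Smult f g = (\<lambda>m. \<Sum>(p, q)\<in>{(p, q). f p \<noteq> 0 \<and> g q \<noteq> 0 \<and> mmul p q = m}. f p * g q)"

definition Sone :: "monom \<Rightarrow> 'k::field" where
  "Sone = (\<lambda>m. if m = ((\<lambda>_. 0), (\<lambda>_. 0)) then 1 else 0)"

definition emon :: "monom \<Rightarrow> monom \<Rightarrow> 'k::field" where
  "emon m = (\<lambda>m'. if m' = m then 1 else 0)"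

definition sing :: "nat \<Rightarrow> nat \<Rightarrow> nat \<Rightarrow> monom" where
  "sing i k l = ((\<lambda>j. if j = i then k else 0), (\<lambda>j. if j = i then l else 0))"

definition mono1 :: "nat \<Rightarrow> nat \<Rightarrow> nat \<Rightarrow> monom \<Rightarrow> 'k::field" where
  "mono1 i k l = emon (sing i k l)"

text \<open>The spanning element x_i^k y_i^l - x_i^(k+1) y_i^(l+1) of F(i).\<close>
definition gen1 :: "nat \<Rightarrow> nat \<Rightarrow> nat \<Rightarrow> monom \<Rightarrow> 'k::field" where
  "gen1 i k l = (\<lambda>m. emon (sing i k l) m - emon (sing i (Suc k) (Suc l)) m)"

definition prodlist :: "(monom \<Rightarrow> 'k::field) list \<Rightarrow> monom \<Rightarrow> 'k" where
  "prodlist fs = foldr Smult fs Sone"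

definition lin_span :: "(monom \<Rightarrow> 'k::field) set \<Rightarrow> (monom \<Rightarrow> 'k) set" where
  "lin_span G = {f. \<exists>M c. finite M \<and> M \<subseteq> G \<and> f = (\<lambda>x. \<Sum>g\<in>M. c g * g x)}"

definition is_ideal :: "nat \<Rightarrow> (monom \<Rightarrow> 'k::field) set \<Rightarrow> bool" where
  "is_ideal n I \<longleftrightarrow> I \<subseteq> Sn n \<and> (\<lambda>_. 0) \<in> I
     \<and> (\<forall>f\<in>I. \<forall>g\<in>I. (\<lambda>m. f m + g m) \<in> I)
     \<and> (\<forall>f\<in>I. (\<lambda>m. - f m) \<in> I)
     \<and> (\<forall>f\<in>I. \<forall>r\<in>Sn n. Smult r f \<in> I \<and> Smult f r \<in> I)"

definition iprod :: "nat \<Rightarrow> (monom \<Rightarrow> 'k::field) set \<Rightarrow> (monom \<Rightarrow> 'k) set \<Rightarrow> (monom \<Rightarrow> 'k) set" where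
  "iprod n I J = \<Inter>{L. is_ideal n L \<and> (\<forall>a\<in>I. \<forall>b\<in>J. Smult a b \<in> L)}"

definition is_prime :: "nat \<Rightarrow> (monom \<Rightarrow> 'k::field) set \<Rightarrow> bool" where
  "is_prime n P \<longleftrightarrow> is_ideal n P \<and> P \<noteq> Sn n \<and>
     (\<forall>I J. is_ideal n I \<and> is_ideal n J \<and> iprod n I J \<subseteq> P \<longrightarrow> I \<subseteq> P \<or> J \<subseteq> P)"

definition height :: "nat \<Rightarrow> (monom \<Rightarrow> 'k::field) set \<Rightarrow> enat" where
  "height n P = (SUP k \<in> {k. \<exists>Q. Q 0 = P \<and> (\<forall>i\<le>k. is_prime n (Q i)) \<and> (\<forall>i<k. Q (Suc i) \<subset> Q i)}. enat k)"

text \<open>p_i = S_1(1) (x) ... (x) F(i) (x) ... (x) S_1(n) (index i in 0..n-1).\<close>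
definition pp :: "nat \<Rightarrow> nat \<Rightarrow> (monom \<Rightarrow> 'k::field) set" where
  "pp n i = lin_span {prodlist (map (\<lambda>j. if j = i then gen1 j (a j) (b j) else mono1 j (a j) (b j)) [0..<n]) | a b. True}"

definition Ftens :: "nat \<Rightarrow> (monom \<Rightarrow> 'k::field) set" where
  "Ftens n = lin_span {prodlist (map (\<lambda>j. gen1 j (a j) (b j)) [0..<n]) | a b. True}"

definition pp_prod :: "nat \<Rightarrow> (monom \<Rightarrow> 'k::field) set" where
  "pp_prod n = foldr (\<lambda>i acc. iprod n (pp n i) acc) [0..<n] (Sn n)"

end

theory Submission
  imports Defs
begin

definition push :: "('a \<Rightarrow> 'b) \<Rightarrow> ('a \<Rightarrow> 'k::field) \<Rightarrow> 'b \<Rightarrow> 'k" where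
  "push \<tau> f y = (\<Sum>x\<in>{x. f x \<noteq> 0 \<and> \<tau> x = y}. f x)"

lemma push_fin:
  assumes "finite A" "{x. f x \<noteq> 0} \<subseteq> A"
  shows "push \<tau> f y = (\<Sum>x\<in>A. if \<tau> x = y then f x else 0)"
proof -
  have "(\<Sum>x\<in>A. if \<tau> x = y then f x else 0) = (\<Sum>x\<in>{x\<in>A. \<tau> x = y}. f x)"
    using assms(1) by (simp add: sum.inter_filter)
  also have "\<dots> = (\<Sum>x\<in>{x. f x \<noteq> 0 \<and> \<tau> x = y}. f x)"
    by (rule sum.mono_neutral_right) (use assms in auto)
  finally show ?thesis unfolding push_def by simp
qed

lemma push_single:
  assumes "\<forall>x. f x \<noteq> 0 \<longrightarrow> \<tau> x = y \<longrightarrow> x = xo"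
  shows "push \<tau> f y = (if \<tau> xo = y then f xo else 0)"
proof -
  have "{x. f x \<noteq> 0 \<and> \<tau> x = y} = (if f xo \<noteq> 0 \<and> \<tau> xo = y then {xo} else {})"
    using assms by auto
  then show ?thesis unfolding push_def by auto
qed

lemma push_preimage:
  assumes "{x. \<tau> x = y} = B" "finite B"
  shows "push \<tau> f y = sum f B"
proof -
  have fin: "finite {x. \<tau> x = y}" using assms by simp
  have "sum f {x. \<tau> x = y} = (\<Sum>x\<in>{x. f x \<noteq> 0 \<and> \<tau> x = y}. f x)"
    by (rule sum.mono_neutral_right[OF fin]) auto
  then show ?thesis unfolding push_def assms(1) by simp
qed

lemma supp_push: "{y. push \<tau> f y \<noteq> 0} \<subseteq> \<tau> ` {x. f x \<noteq> 0}"
proof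
  fix y assume y: "y \<in> {y. push \<tau> f y \<noteq> 0}"
  show "y \<in> \<tau> ` {x. f x \<noteq> 0}"
  proof (rule ccontr)
    assume "y \<notin> \<tau> ` {x. f x \<noteq> 0}"
    then have e: "{x. f x \<noteq> 0 \<and> \<tau> x = y} = {}" by blast
    have "push \<tau> f y = 0" unfolding push_def e by simp
    with y show False by simp
  qed
qed

lemma finite_supp_push: "finite {x. f x \<noteq> 0} \<Longrightarrow> finite {y. push \<tau> f y \<noteq> 0}"
  by (rule finite_subset[OF supp_push finite_imageI])

lemma push_comp:
  assumes fin: "finite {x. f x \<noteq> 0}"
  shows "push \<phi> (push \<tau> f) = push (\<phi> \<circ> \<tau>) f"
proof
  fix z
  let ?A = "{x. f x \<noteq> 0}" let ?B = "\<tau> ` ?A"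
  have "push \<phi> (push \<tau> f) z = (\<Sum>y\<in>?B. if \<phi> y = z then push \<tau> f y else 0)"
    using finite_imageI[OF fin] supp_push by (rule push_fin)
  also have "\<dots> = (\<Sum>y\<in>?B. \<Sum>x\<in>?A. if \<phi> y = z \<and> \<tau> x = y then f x else 0)"
    apply (rule sum.cong[OF refl])
    subgoal for y by (cases "\<phi> y = z") (simp_all add: push_fin[OF fin order_refl])
    done
  also have "\<dots> = (\<Sum>x\<in>?A. \<Sum>y\<in>?B. if \<phi> y = z \<and> \<tau> x = y then f x else 0)"
    by (rule sum.swap)
  also have "\<dots> = (\<Sum>x\<in>?A. if (\<phi> \<circ> \<tau>) x = z then f x else 0)"
  proof (rule sum.cong[OF refl])
    fix x assume x: "x \<in> ?A"
    have "(\<Sum>y\<in>?B. if \<phi> y = z \<and> \<tau> x = y then f x else 0) = (\<Sum>y\<in>?B. if \<tau> x = y then (if \<phi> (\<tau> x) = z then f x else 0) else 0)"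
      by (rule sum.cong) auto
    also have "\<dots> = (if (\<phi> \<circ> \<tau>) x = z then f x else 0)"
      using x fin by (simp add: sum.delta)
    finally show "(\<Sum>y\<in>?B. if \<phi> y = z \<and> \<tau> x = y then f x else 0) = (if (\<phi> \<circ> \<tau>) x = z then f x else 0)" .
  qed
  also have "\<dots> = push (\<phi> \<circ> \<tau>) f z" by (rule push_fin[symmetric]) (use fin in auto)
  finally show "push \<phi> (push \<tau> f) z = push (\<phi> \<circ> \<tau>) f z" .
qed

lemma push_tensor:
  assumes ff: "finite {x. f x \<noteq> 0}" and fg: "finite {x. g x \<noteq> 0}"
  shows "push (map_prod \<phi> \<psi>) (\<lambda>(p,q). f p * g q) (u,v) = push \<phi> f u * push \<psi> g v"
proof -
  let ?A = "{x. f x \<noteq> 0}" let ?B = "{x. g x \<noteq> 0}"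
  have "push (map_prod \<phi> \<psi>) (\<lambda>(p,q). f p * g q) (u,v) = (\<Sum>pq\<in>?A \<times> ?B. if map_prod \<phi> \<psi> pq = (u,v) then (\<lambda>(p,q). f p * g q) pq else 0)"
    by (rule push_fin) (use ff fg in auto)
  also have "\<dots> = (\<Sum>p\<in>?A. \<Sum>q\<in>?B. (if \<phi> p = u then f p else 0) * (if \<psi> q = v then g q else 0))"
    by (simp add: sum.cartesian_product) (rule sum.cong, auto)
  also have "\<dots> = (\<Sum>p\<in>?A. if \<phi> p = u then f p else 0) * (\<Sum>q\<in>?B. if \<psi> q = v then g q else 0)"
    by (simp add: sum_product)
  also have "\<dots> = push \<phi> f u * push \<psi> g v"
    by (simp add: push_fin[OF ff order_refl] push_fin[OF fg order_refl])
  finally show ?thesis .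
qed

lemma Smult_push: "Smult f g = push (case_prod mmul) (\<lambda>(p,q). f p * g q)"
  unfolding Smult_def push_def
  by (rule ext, rule sum.cong) auto


abbreviation zm :: monom where "zm \<equiv> ((\<lambda>_. 0), (\<lambda>_. 0))"

lemma Sn_iff: "f \<in> Sn n \<longleftrightarrow> finite {x. f x \<noteq> 0} \<and> {x. f x \<noteq> 0} \<subseteq> monset n"
  unfolding Sn_def by auto

lemma SnD: "f \<in> Sn n \<Longrightarrow> finite {x. f x \<noteq> 0}" "f \<in> Sn n \<Longrightarrow> f x \<noteq> 0 \<Longrightarrow> x \<in> monset n"
  by (metis (mono_tags, lifting) Sn_def mem_Collect_eq)+

lemma monset_iff: "x \<in> monset n \<longleftrightarrow> (\<forall>i\<ge>n. fst x i = 0 \<and> snd x i = 0)"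
  unfolding monset_def by (cases x) auto

lemma mmul_monset: "p \<in> monset n \<Longrightarrow> q \<in> monset n \<Longrightarrow> mmul p q \<in> monset n"
  unfolding monset_iff mmul_def by auto

lemma mmul_zero_left[simp]: "mmul zm q = q" unfolding mmul_def by (cases q) auto
lemma mmul_zero_right[simp]: "mmul p zm = p" unfolding mmul_def by (cases p) auto

lemma zm_monset[simp]: "zm \<in> monset n" unfolding monset_def by auto

lemma fin_prodfun:
  assumes "finite {x. f x \<noteq> 0}" "finite {x. g x \<noteq> 0}"
  shows "finite {pq. (\<lambda>(p,q). f p * (g q :: 'k::field)) pq \<noteq> 0}"
proof -
  have "{pq. (\<lambda>(p,q). f p * g q) pq \<noteq> 0} \<subseteq> {x. f x \<noteq> 0} \<times> {x. g x \<noteq> 0}" by auto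
  then show ?thesis using assms by (simp add: finite_subset)
qed

lemma Smult_fin:
  assumes "finite {x. f x \<noteq> 0}" "finite {x. g x \<noteq> 0}"
  shows "finite {x. Smult f g x \<noteq> (0::'k::field)}"
  unfolding Smult_push by (rule finite_supp_push[OF fin_prodfun[OF assms]])

lemma Smult_Sn:
  assumes f: "f \<in> Sn n" and g: "g \<in> Sn n"
  shows "Smult f g \<in> Sn n"
proof -
  have "{x. Smult f g x \<noteq> 0} \<subseteq> case_prod mmul ` {pq. (\<lambda>(p,q). f p * g q) pq \<noteq> 0}"
    unfolding Smult_push by (rule supp_push)
  also have "\<dots> \<subseteq> monset n"
    using SnD(2)[OF f] SnD(2)[OF g] mmul_monset by fastforce
  finally show ?thesis unfolding Sn_iff using Smult_fin SnD(1)[OF f] SnD(1)[OF g] by blast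
qed

lemma push_lin:
  assumes ff: "finite {x. f x \<noteq> 0}" and fg: "finite {x. g x \<noteq> 0}"
  shows "push \<tau> (\<lambda>x. a * f x + b * g x) y = a * push \<tau> f y + b * push \<tau> g y"
proof -
  let ?A = "{x. f x \<noteq> 0} \<union> {x. g x \<noteq> 0}"
  have fA: "finite ?A" using ff fg by simp
  have "push \<tau> (\<lambda>x. a * f x + b * g x) y = (\<Sum>x\<in>?A. if \<tau> x = y then a * f x + b * g x else 0)"
    by (rule push_fin[OF fA]) auto
  also have "\<dots> = a * (\<Sum>x\<in>?A. if \<tau> x = y then f x else 0) + b * (\<Sum>x\<in>?A. if \<tau> x = y then g x else 0)"
    by (simp add: sum_distrib_left sum.distrib[symmetric] if_distrib) (rule sum.cong, auto)
  also have "\<dots> = a * push \<tau> f y + b * push \<tau> g y"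
  proof -
    have "push \<tau> f y = (\<Sum>x\<in>?A. if \<tau> x = y then f x else 0)" by (rule push_fin[OF fA]) auto
    moreover have "push \<tau> g y = (\<Sum>x\<in>?A. if \<tau> x = y then g x else 0)" by (rule push_fin[OF fA]) auto
    ultimately show ?thesis by simp
  qed
  finally show ?thesis .
qed

lemma push_diff:
  assumes ff: "finite {x. f x \<noteq> 0}" and fg: "finite {x. g x \<noteq> 0}"
  shows "push \<tau> (\<lambda>x. f x - c * g x) y = push \<tau> f y - c * push \<tau> g y"
  using push_lin[OF ff fg, where a=1 and b="- c" and \<tau>=\<tau> and y=y] by simp

lemma push_id[simp]: "push (\<lambda>x. x) f = f"
proof
  fix y show "push (\<lambda>x. x) f y = f y"
    by (subst push_single[where xo=y]) auto
qed

lemma Smult_emon_left: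
  assumes ff: "finite {x. f x \<noteq> 0}"
  shows "Smult (emon p0) f = push (mmul p0) (f :: monom \<Rightarrow> 'k::field)"
proof
  fix x
  have "Smult (emon p0) f x = (\<Sum>pq\<in>{p0} \<times> {x. f x \<noteq> 0}. if case_prod mmul pq = x then (\<lambda>(p,q). emon p0 p * f q) pq else 0)"
    unfolding Smult_push by (rule push_fin) (use ff in \<open>auto simp: emon_def split: if_splits\<close>)
  also have "\<dots> = push (mmul p0) f x"
  proof -
    have e: "{p0} \<times> {x. f x \<noteq> 0} = Pair p0 ` {x. f x \<noteq> 0}" by auto
    show ?thesis unfolding e
      by (simp add: sum.reindex inj_on_def push_fin[OF ff order_refl]) (rule sum.cong, auto simp: emon_def)
  qed
  finally show "Smult (emon p0) f x = push (mmul p0) f x" .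
qed

lemma Smult_emon_right:
  assumes ff: "finite {x. f x \<noteq> 0}"
  shows "Smult f (emon q0) = push (\<lambda>p. mmul p q0) (f :: monom \<Rightarrow> 'k::field)"
proof
  fix x
  have "Smult f (emon q0) x = (\<Sum>pq\<in>{x. f x \<noteq> 0} \<times> {q0}. if case_prod mmul pq = x then (\<lambda>(p,q). f p * emon q0 q) pq else 0)"
    unfolding Smult_push by (rule push_fin) (use ff in \<open>auto simp: emon_def split: if_splits\<close>)
  also have "\<dots> = push (\<lambda>p. mmul p q0) f x"
  proof -
    have e: "{x. f x \<noteq> 0} \<times> {q0} = (\<lambda>p. (p, q0)) ` {x. f x \<noteq> 0}" by auto
    show ?thesis unfolding e
      by (simp add: sum.reindex inj_on_def push_fin[OF ff order_refl]) (rule sum.cong, auto simp: emon_def)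
  qed
  finally show "Smult f (emon q0) x = push (\<lambda>p. mmul p q0) f x" .
qed

lemma Sone_emon: "Sone = emon zm" unfolding Sone_def emon_def by auto

lemma Smult_Sone_left: "finite {x. f x \<noteq> 0} \<Longrightarrow> Smult Sone f = (f :: monom \<Rightarrow> 'k::field)"
proof -
  have "mmul zm = (\<lambda>x. x)" by (rule ext) simp
  then show "finite {x. f x \<noteq> 0} \<Longrightarrow> Smult Sone f = f" by (simp add: Sone_emon Smult_emon_left)
qed

lemma Smult_lin_right:
  assumes ff: "finite {x. f x \<noteq> 0}" and fu: "finite {x. u x \<noteq> 0}" and fv: "finite {x. v x \<noteq> 0}"
  shows "Smult f (\<lambda>x. a * u x + b * v x) = (\<lambda>x. a * Smult f u x + b * Smult f v x :: 'k::field)"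
proof
  fix y
  have e: "(\<lambda>(p,q). f p * (a * u q + b * v q)) = (\<lambda>pq. a * (\<lambda>(p,q). f p * u q) pq + b * (\<lambda>(p,q). f p * v q) pq)"
    by (auto simp: algebra_simps)
  show "Smult f (\<lambda>x. a * u x + b * v x) y = a * Smult f u y + b * Smult f v y"
    unfolding Smult_push e by (rule push_lin[OF fin_prodfun[OF ff fu] fin_prodfun[OF ff fv]])
qed

lemma Smult_lin_left:
  assumes fu: "finite {x. u x \<noteq> 0}" and fv: "finite {x. v x \<noteq> 0}" and ff: "finite {x. f x \<noteq> 0}"
  shows "Smult (\<lambda>x. a * u x + b * v x) f = (\<lambda>x. a * Smult u f x + b * Smult v f x :: 'k::field)"
proof
  fix y
  have e: "(\<lambda>(p,q). (a * u p + b * v p) * f q) = (\<lambda>pq. a * (\<lambda>(p,q). u p * f q) pq + b * (\<lambda>(p,q). v p * f q) pq)"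
    by (auto simp: algebra_simps)
  show "Smult (\<lambda>x. a * u x + b * v x) f y = a * Smult u f y + b * Smult v f y"
    unfolding Smult_push e by (rule push_lin[OF fin_prodfun[OF fu ff] fin_prodfun[OF fv ff]])
qed


lemma Sn_lin:
  assumes "f \<in> Sn n" "g \<in> Sn n"
  shows "(\<lambda>x. a * f x + b * g x :: 'k::field) \<in> Sn n"
proof -
  have s: "{x. a * f x + b * g x \<noteq> 0} \<subseteq> {x. f x \<noteq> 0} \<union> {x. g x \<noteq> 0}" by auto
  show ?thesis unfolding Sn_iff
    using finite_subset[OF s] SnD[OF assms(1)] SnD[OF assms(2)] s by auto
qed

lemma Sn_zero: "(\<lambda>_. 0 :: 'k::field) \<in> Sn n" unfolding Sn_iff by simp

lemma Sone_Sn: "(Sone :: monom \<Rightarrow> 'k::field) \<in> Sn n"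
  unfolding Sn_iff Sone_def by auto

lemma emon_Sn: "m \<in> monset n \<Longrightarrow> (emon m :: monom \<Rightarrow> 'k::field) \<in> Sn n"
  unfolding Sn_iff emon_def by auto

lemma Smult_zero_left[simp]: "Smult (\<lambda>_. 0) g = (\<lambda>_. 0 :: 'k::field)"
  unfolding Smult_def by simp
lemma Smult_zero_right[simp]: "Smult f (\<lambda>_. 0) = (\<lambda>_. 0 :: 'k::field)"
  unfolding Smult_def by simp

lemma ideal_Sn: "is_ideal n (Sn n :: (monom \<Rightarrow> 'k::field) set)"
  unfolding is_ideal_def
proof (intro conjI ballI)
  show "(\<lambda>_. 0) \<in> (Sn n :: (monom \<Rightarrow> 'k) set)" by (rule Sn_zero)
next
  fix f g :: "monom \<Rightarrow> 'k" assume "f \<in> Sn n" "g \<in> Sn n"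
  then show "(\<lambda>m. f m + g m) \<in> Sn n" using Sn_lin[of f n g 1 1] by simp
next
  fix f :: "monom \<Rightarrow> 'k" assume "f \<in> Sn n"
  then show "(\<lambda>m. - f m) \<in> Sn n" using Sn_lin[of f n f "-1" 0] by simp
next
  fix f r :: "monom \<Rightarrow> 'k" assume "f \<in> Sn n" "r \<in> Sn n"
  then show "Smult r f \<in> Sn n" "Smult f r \<in> Sn n" by (simp_all add: Smult_Sn)
qed simp

lemma idealD:
  assumes "is_ideal n I"
  shows "I \<subseteq> Sn n" "(\<lambda>_. 0) \<in> I" "f \<in> I \<Longrightarrow> g \<in> I \<Longrightarrow> (\<lambda>m. f m + g m) \<in> I"
    "f \<in> I \<Longrightarrow> (\<lambda>m. - f m) \<in> I" "f \<in> I \<Longrightarrow> r \<in> Sn n \<Longrightarrow> Smult r f \<in> I"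
    "f \<in> I \<Longrightarrow> r \<in> Sn n \<Longrightarrow> Smult f r \<in> I"
  using assms unfolding is_ideal_def by blast+

lemma ideal_scale:
  assumes I: "is_ideal n I" and h: "h \<in> I"
  shows "(\<lambda>x. c * h x :: 'k::field) \<in> I"
proof -
  have hS: "h \<in> Sn n" using idealD(1)[OF I] h by blast
  have cS: "(\<lambda>x. c * Sone x + 0 * Sone x :: 'k) \<in> Sn n" by (rule Sn_lin[OF Sone_Sn Sone_Sn])
  have "Smult (\<lambda>x. c * Sone x + 0 * Sone x) h = (\<lambda>x. c * Smult Sone h x + 0 * Smult Sone h x)"
    by (rule Smult_lin_left) (use SnD(1)[OF Sone_Sn] SnD(1)[OF hS] in auto)
  also have "\<dots> = (\<lambda>x. c * h x)" using Smult_Sone_left[OF SnD(1)[OF hS]] by simp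
  finally show ?thesis using idealD(5)[OF I h cS] by simp
qed

lemma ideal_lin:
  assumes I: "is_ideal n I" and "f \<in> I" "g \<in> I"
  shows "(\<lambda>x. a * f x + b * g x :: 'k::field) \<in> I"
  using idealD(3)[OF I ideal_scale[OF I assms(2)] ideal_scale[OF I assms(3)]] by simp

lemma ideal_sum:
  assumes I: "is_ideal n I" and M: "finite M" "M \<subseteq> I"
  shows "(\<lambda>x. \<Sum>g\<in>M. c g * g x :: 'k::field) \<in> I"
  using M
proof (induction M rule: finite_induct)
  case empty then show ?case using idealD(2)[OF I] by simp
next
  case (insert g M)
  then have "(\<lambda>x. 1 * (\<Sum>g\<in>M. c g * g x) + c g * g x) \<in> I"
    by (intro ideal_lin[OF I]) auto
  then show ?case using insert by (simp add: add.commute)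
qed

lemma span_sub_ideal:
  assumes I: "is_ideal n I" and G: "G \<subseteq> I"
  shows "lin_span G \<subseteq> I"
proof
  fix f assume "f \<in> lin_span G"
  then obtain M c where "finite M" "M \<subseteq> G" "f = (\<lambda>x. \<Sum>g\<in>M. c g * g x)"
    unfolding lin_span_def by blast
  then show "f \<in> I" using ideal_sum[OF I, of M c] G by auto
qed

lemma span_gen: "g \<in> G \<Longrightarrow> g \<in> lin_span (G :: (monom \<Rightarrow> 'k::field) set)"
  unfolding lin_span_def
  by (rule CollectI, rule exI[of _ "{g}"], rule exI[of _ "\<lambda>_. 1"]) auto

lemma span_zero: "(\<lambda>_. 0) \<in> lin_span (G :: (monom \<Rightarrow> 'k::field) set)"
  unfolding lin_span_def
  by (rule CollectI, rule exI[of _ "{}"]) auto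

lemma span_lin:
  assumes "f \<in> lin_span G" "g \<in> lin_span G"
  shows "(\<lambda>x. f x + c * g x :: 'k::field) \<in> lin_span G"
proof -
  obtain M1 c1 where M1: "finite M1" "M1 \<subseteq> G" "f = (\<lambda>x. \<Sum>h\<in>M1. c1 h * h x)"
    using assms(1) unfolding lin_span_def by blast
  obtain M2 c2 where M2: "finite M2" "M2 \<subseteq> G" "g = (\<lambda>x. \<Sum>h\<in>M2. c2 h * h x)"
    using assms(2) unfolding lin_span_def by blast
  define d where "d h = (if h \<in> M1 then c1 h else 0) + c * (if h \<in> M2 then c2 h else 0)" for h
  have fin: "finite (M1 \<union> M2)" using M1 M2 by simp
  have "(\<lambda>x. f x + c * g x) = (\<lambda>x. \<Sum>h\<in>M1 \<union> M2. d h * h x)"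
  proof
    fix x
    have a: "(\<Sum>h\<in>M1 \<union> M2. (if h \<in> M1 then c1 h else 0) * h x) = (\<Sum>h\<in>M1. c1 h * h x)"
      by (rule sum.mono_neutral_cong_right) (use fin in auto)
    have b: "(\<Sum>h\<in>M1 \<union> M2. (if h \<in> M2 then c2 h else 0) * h x) = (\<Sum>h\<in>M2. c2 h * h x)"
      by (rule sum.mono_neutral_cong_right) (use fin in auto)
    have "(\<Sum>h\<in>M1 \<union> M2. d h * h x) = (\<Sum>h\<in>M1 \<union> M2. (if h \<in> M1 then c1 h else 0) * h x)
        + c * (\<Sum>h\<in>M1 \<union> M2. (if h \<in> M2 then c2 h else 0) * h x)"
      unfolding d_def by (simp add: algebra_simps sum.distrib sum_distrib_left)
    then show "f x + c * g x = (\<Sum>h\<in>M1 \<union> M2. d h * h x)" using a b M1(3) M2(3) by simp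
  qed
  then show ?thesis unfolding lin_span_def using fin M1(2) M2(2) by blast
qed

lemma ideal_Inter:
  assumes "\<LL> \<noteq> {}" "\<forall>L\<in>\<LL>. is_ideal n L"
  shows "is_ideal n (\<Inter>\<LL> :: (monom \<Rightarrow> 'k::field) set)"
  unfolding is_ideal_def
proof (intro conjI ballI)
  obtain L0 where L0: "L0 \<in> \<LL>" using assms(1) by blast
  show "\<Inter>\<LL> \<subseteq> Sn n" using idealD(1) assms(2) L0 by blast
  show "(\<lambda>_. 0) \<in> \<Inter>\<LL>" using idealD(2) assms(2) by blast
  fix f assume f: "f \<in> \<Inter>\<LL>"
  show "(\<lambda>m. - f m) \<in> \<Inter>\<LL>"
  proof
    fix L assume "L \<in> \<LL>" then show "(\<lambda>m. - f m) \<in> L" using idealD(4)[of n L f] assms(2) f by blast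
  qed
  { fix g assume g: "g \<in> \<Inter>\<LL>"
    show "(\<lambda>m. f m + g m) \<in> \<Inter>\<LL>"
    proof
      fix L assume "L \<in> \<LL>" then show "(\<lambda>m. f m + g m) \<in> L" using idealD(3)[of n L f g] assms(2) f g by blast
    qed }
  { fix r :: "monom \<Rightarrow> 'k" assume r: "r \<in> Sn n"
    show "Smult r f \<in> \<Inter>\<LL>"
    proof
      fix L assume "L \<in> \<LL>" then show "Smult r f \<in> L" using idealD(5)[of n L f r] assms(2) f r by blast
    qed
    show "Smult f r \<in> \<Inter>\<LL>"
    proof
      fix L assume "L \<in> \<LL>" then show "Smult f r \<in> L" using idealD(6)[of n L f r] assms(2) f r by blast
    qed }
qed

lemma iprod_ideal:
  assumes "I \<subseteq> Sn n" "J \<subseteq> Sn n"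
  shows "is_ideal n (iprod n I J :: (monom \<Rightarrow> 'k::field) set)"
proof -
  have "Sn n \<in> {L. is_ideal n L \<and> (\<forall>a\<in>I. \<forall>b\<in>J. Smult a b \<in> L)}"
    using ideal_Sn Smult_Sn assms by blast
  then show ?thesis unfolding iprod_def by (intro ideal_Inter) auto
qed

lemma iprod_mem:
  "a \<in> I \<Longrightarrow> b \<in> J \<Longrightarrow> Smult a b \<in> iprod n I (J :: (monom \<Rightarrow> 'k::field) set)"
  unfolding iprod_def by blast

lemma iprod_sub:
  assumes I: "is_ideal n I" and J: "is_ideal n J"
  shows "iprod n I J \<subseteq> I \<inter> (J :: (monom \<Rightarrow> 'k::field) set)"
proof -
  have "I \<in> {L. is_ideal n L \<and> (\<forall>a\<in>I. \<forall>b\<in>J. Smult a b \<in> L)}"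
    using I idealD(6)[OF I] idealD(1)[OF J] by blast
  moreover have "J \<in> {L. is_ideal n L \<and> (\<forall>a\<in>I. \<forall>b\<in>J. Smult a b \<in> L)}"
    using J idealD(5)[OF J] idealD(1)[OF I] by blast
  ultimately show ?thesis unfolding iprod_def by blast
qed

lemma ideal_zero: "is_ideal n {(\<lambda>_. 0 :: 'k::field)}"
  unfolding is_ideal_def using Sn_zero by auto


definition okr :: "nat \<Rightarrow> nat \<Rightarrow> monom \<Rightarrow> bool" where
  "okr lo hi x \<longleftrightarrow> (\<forall>j. (j < lo \<or> hi \<le> j) \<longrightarrow> fst x j = 0 \<and> snd x j = 0)"

lemma prodlist_Cons: "prodlist (f # fs) = Smult f (prodlist fs)"
  unfolding prodlist_def by simp
lemma prodlist_Nil: "prodlist [] = Sone"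
  unfolding prodlist_def by simp

lemma prodlist_Sn: "set fs \<subseteq> Sn n \<Longrightarrow> prodlist fs \<in> (Sn n :: (monom \<Rightarrow> 'k::field) set)"
  by (induction fs) (auto simp: prodlist_Cons prodlist_Nil Sone_Sn Smult_Sn)

lemma mmul_sing:
  assumes "fst q j = 0" "snd q j = 0"
  shows "mmul (sing j k l) q = ((fst q)(j:=k), (snd q)(j:=l))"
  using assms unfolding mmul_def sing_def by (auto simp: fun_eq_iff)

lemma sing_eq_iff: "sing j a b = sing j c d \<longleftrightarrow> a = c \<and> b = d"
  unfolding sing_def by (auto simp: fun_eq_iff)

lemma prodlist_formula:
  assumes "\<forall>j\<in>{lo..<lo+k}. \<forall>y. h j y \<noteq> 0 \<longrightarrow> (\<exists>a b. y = sing j a b)"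
  shows "prodlist (map h [lo..<lo+k]) x =
     (if okr lo (lo+k) x then \<Prod>j\<in>{lo..<lo+k}. h j (sing j (fst x j) (snd x j)) else (0::'k::field))"
  using assms
proof (induction k arbitrary: lo x)
  case 0
  have "okr lo lo x \<longleftrightarrow> x = zm" unfolding okr_def by (cases x) (auto simp: fun_eq_iff)
  then show ?case by (simp add: prodlist_Nil Sone_def)
next
  case (Suc k)
  let ?R = "prodlist (map h [Suc lo..<Suc lo+k])"
  have IH: "\<And>y. ?R y = (if okr (Suc lo) (Suc lo+k) y then \<Prod>j\<in>{Suc lo..<Suc lo+k}. h j (sing j (fst y j) (snd y j)) else 0)"
    by (rule Suc.IH) (use Suc.prems in auto)
  have ul: "[lo..<lo + Suc k] = lo # [Suc lo..<Suc lo+k]" by (simp add: upt_conv_Cons)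
  define q0 where "q0 = ((fst x)(lo:=0), (snd x)(lo:=0))"
  define y0 where "y0 = (sing lo (fst x lo) (snd x lo), q0)"
  let ?F = "\<lambda>(p,q). h lo p * ?R q"
  have uniq: "\<forall>y. ?F y \<noteq> 0 \<longrightarrow> case_prod mmul y = x \<longrightarrow> y = y0"
  proof (intro allI impI)
    fix y assume F: "?F y \<noteq> 0" and m: "case_prod mmul y = x"
    obtain p q where y: "y = (p,q)" by (cases y)
    have hp: "h lo p \<noteq> 0" and Rq: "?R q \<noteq> 0" using F y by auto
    have lo: "lo \<in> {lo..<lo+Suc k}" by simp
    obtain a b where p: "p = sing lo a b" using Suc.prems[rule_format, OF lo hp] by blast
    have okq: "okr (Suc lo) (Suc lo+k) q" using Rq IH[of q] by (auto split: if_splits)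
    then have q0: "fst q lo = 0" "snd q lo = 0" unfolding okr_def by auto
    have "mmul p q = ((fst q)(lo:=a), (snd q)(lo:=b))" unfolding p by (rule mmul_sing[OF q0])
    with m y have x: "x = ((fst q)(lo:=a), (snd q)(lo:=b))" by simp
    then have "fst x lo = a" "snd x lo = b" by auto
    moreover have "q = q0" unfolding q0_def using x q0 by (cases q) (auto simp: fun_eq_iff)
    ultimately show "y = y0" unfolding y0_def y p by simp
  qed
  have my0: "case_prod mmul y0 = x"
    unfolding y0_def q0_def by (simp add: mmul_sing fun_eq_iff)
  have okiff: "okr (Suc lo) (Suc lo+k) q0 \<longleftrightarrow> okr lo (lo + Suc k) x"
    unfolding okr_def q0_def by auto
  have prodeq: "(\<Prod>j\<in>{Suc lo..<Suc lo+k}. h j (sing j (fst q0 j) (snd q0 j))) = (\<Prod>j\<in>{Suc lo..<Suc lo+k}. h j (sing j (fst x j) (snd x j)))"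
    by (rule prod.cong) (auto simp: q0_def)
  have "prodlist (map h [lo..<lo + Suc k]) x = Smult (h lo) ?R x"
    unfolding ul by (simp add: prodlist_Cons)
  also have "\<dots> = ?F y0"
    unfolding Smult_push using push_single[OF uniq] my0 by simp
  also have "\<dots> = h lo (sing lo (fst x lo) (snd x lo)) * ?R q0" unfolding y0_def by simp
  also have "\<dots> = (if okr lo (lo+Suc k) x then \<Prod>j\<in>{lo..<lo+Suc k}. h j (sing j (fst x j) (snd x j)) else 0)"
    unfolding IH okiff prodeq by (simp add: prod.atLeast_Suc_lessThan)
  finally show ?case .
qed

lemma okr_monset: "okr 0 n x \<longleftrightarrow> x \<in> monset n"
  unfolding okr_def monset_iff by auto

lemma prodlist_formula0:
  assumes "\<forall>j<n. \<forall>y. h j y \<noteq> 0 \<longrightarrow> (\<exists>a b. y = sing j a b)"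
  shows "prodlist (map h [0..<n]) x =
     (if x \<in> monset n then \<Prod>j<n. h j (sing j (fst x j) (snd x j)) else (0::'k::field))"
  using prodlist_formula[of 0 n h x] assms by (simp add: okr_monset atLeast0LessThan)

lemma emon_sing: "emon (sing j a b) (sing j s t) = (if s = a \<and> t = b then 1 else 0)"
  unfolding emon_def by (simp add: sing_eq_iff)

lemma mono1_sing: "mono1 j a b (sing j s t) = (if s = a \<and> t = b then 1 else 0)"
  unfolding mono1_def by (rule emon_sing)

lemma gen1_sing: "gen1 j a b (sing j s t) = (if s = a \<and> t = b then 1 else 0) - (if s = Suc a \<and> t = Suc b then 1 else 0)"
  unfolding gen1_def by (simp add: emon_sing)

lemma mono1_supp: "mono1 j a b y \<noteq> (0::'k::field) \<Longrightarrow> \<exists>c d. y = sing j c d"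
  unfolding mono1_def emon_def by (auto split: if_splits)

lemma gen1_supp: "gen1 j a b y \<noteq> (0::'k::field) \<Longrightarrow> \<exists>c d. y = sing j c d"
  unfolding gen1_def emon_def by (auto split: if_splits)

lemma sing_monset: "j < n \<Longrightarrow> sing j a b \<in> monset n"
  unfolding sing_def monset_def by auto

lemma mono1_Sn: "j < n \<Longrightarrow> (mono1 j a b :: monom \<Rightarrow> 'k::field) \<in> Sn n"
  unfolding mono1_def by (rule emon_Sn[OF sing_monset])

lemma gen1_Sn: "j < n \<Longrightarrow> (gen1 j a b :: monom \<Rightarrow> 'k::field) \<in> Sn n"
proof -
  assume j: "j < n"
  have "(\<lambda>x. 1 * emon (sing j a b) x + (-1) * emon (sing j (Suc a) (Suc b)) x :: 'k) \<in> Sn n"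
    by (rule Sn_lin[OF emon_Sn[OF sing_monset[OF j]] emon_Sn[OF sing_monset[OF j]]])
  then show ?thesis unfolding gen1_def by simp
qed

lemma prod_indic: "finite S \<Longrightarrow> (\<Prod>j\<in>S. if P j then 1 else 0) = (if \<forall>j\<in>S. P j then 1 else (0::'k::field))"
  by (induction S rule: finite_induct) auto


definition phi :: "nat \<Rightarrow> monom \<Rightarrow> monom \<times> int" where
  "phi i m = (((fst m)(i:=0), (snd m)(i:=0)), int (fst m i) - int (snd m i))"

definition psi :: "monom \<times> int \<Rightarrow> monom \<times> int \<Rightarrow> monom \<times> int" where
  "psi u v = (mmul (fst u) (fst v), snd u + snd v)"

definition Kid :: "nat \<Rightarrow> nat \<Rightarrow> (monom \<Rightarrow> 'k::field) set" where
  "Kid n i = {f \<in> Sn n. \<forall>z. push (phi i) f z = 0}"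

lemma phi_hom: "phi i (mmul p q) = psi (phi i p) (phi i q)"
  unfolding phi_def psi_def mmul_def by (auto simp: fun_eq_iff)

lemma push_emon: "push \<tau> (emon m) z = (if \<tau> m = z then 1 else (0::'k::field))"
  by (subst push_single[where xo=m]) (auto simp: emon_def)

lemma emon_fin: "finite {x. (emon m :: monom \<Rightarrow> 'k::field) x \<noteq> 0}"
  unfolding emon_def by simp

lemma push_Smult:
  assumes ff: "finite {x. f x \<noteq> 0}" and fg: "finite {x. g x \<noteq> 0}"
  shows "push (phi i) (Smult f g) = push (case_prod psi) (\<lambda>(u,v). push (phi i) f u * push (phi i) g v :: 'k::field)"
proof -
  let ?F = "\<lambda>(p,q). f p * g q"
  have e1: "phi i \<circ> case_prod mmul = case_prod psi \<circ> map_prod (phi i) (phi i)"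
    by (auto simp: fun_eq_iff phi_hom)
  have e2: "push (map_prod (phi i) (phi i)) ?F = (\<lambda>(u,v). push (phi i) f u * push (phi i) g v)"
    by (auto simp: fun_eq_iff push_tensor[OF ff fg])
  have "push (phi i) (Smult f g) = push (phi i \<circ> case_prod mmul) ?F"
    unfolding Smult_push by (rule push_comp[OF fin_prodfun[OF ff fg]])
  also have "\<dots> = push (case_prod psi) (push (map_prod (phi i) (phi i)) ?F)"
    unfolding e1 by (rule push_comp[OF fin_prodfun[OF ff fg], symmetric])
  finally show ?thesis unfolding e2 .
qed

lemma push_zero_fun[simp]: "push \<tau> (\<lambda>_. 0::'k::field) = (\<lambda>_. 0)"
  unfolding push_def by auto

lemma KidD: "f \<in> Kid n i \<Longrightarrow> f \<in> Sn n" "f \<in> Kid n i \<Longrightarrow> push (phi i) f z = 0"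
  by (metis (mono_tags, lifting) Kid_def mem_Collect_eq)+

lemma Kid_diff:
  assumes "f \<in> Kid n i" "g \<in> Kid n i"
  shows "(\<lambda>x. f x - c * g x) \<in> Kid n i"
proof -
  have "(\<lambda>x. 1 * f x + (- c) * g x) \<in> Sn n" by (rule Sn_lin[OF KidD(1)[OF assms(1)] KidD(1)[OF assms(2)]])
  moreover have "push (phi i) (\<lambda>x. f x - c * g x) z = 0" for z
    by (simp add: push_diff[OF SnD(1)[OF KidD(1)[OF assms(1)]] SnD(1)[OF KidD(1)[OF assms(2)]]] KidD(2)[OF assms(1)] KidD(2)[OF assms(2)])
  ultimately show ?thesis unfolding Kid_def by simp
qed

lemma Kid_ideal: "is_ideal n (Kid n i :: (monom \<Rightarrow> 'k::field) set)"
  unfolding is_ideal_def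
proof (intro conjI ballI)
  show "Kid n i \<subseteq> Sn n" unfolding Kid_def by auto
  show "(\<lambda>_. 0) \<in> (Kid n i :: (monom \<Rightarrow> 'k) set)" unfolding Kid_def using Sn_zero by auto
  fix f :: "monom \<Rightarrow> 'k" assume f: "f \<in> Kid n i"
  show "(\<lambda>m. - f m) \<in> Kid n i" using Kid_diff[OF f f, of 2] by simp
  { fix g :: "monom \<Rightarrow> 'k" assume g: "g \<in> Kid n i"
    show "(\<lambda>m. f m + g m) \<in> Kid n i" using Kid_diff[OF f g, of "-1"] by simp }
  { fix r :: "monom \<Rightarrow> 'k" assume r: "r \<in> Sn n"
    have ff: "finite {x. f x \<noteq> 0}" using SnD(1)[OF KidD(1)[OF f]] .
    have fr: "finite {x. r x \<noteq> 0}" using SnD(1)[OF r] .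
    have pf: "push (phi i) f = (\<lambda>_. 0)" using KidD(2)[OF f] by auto
    show "Smult r f \<in> Kid n i" unfolding Kid_def
      using Smult_Sn[OF r KidD(1)[OF f]] push_Smult[OF fr ff, of i] pf by (simp add: case_prod_beta')
    show "Smult f r \<in> Kid n i" unfolding Kid_def
      using Smult_Sn[OF KidD(1)[OF f] r] push_Smult[OF ff fr, of i] pf by (simp add: case_prod_beta') }
qed

definition rs :: "nat \<Rightarrow> (nat \<Rightarrow> nat) \<Rightarrow> (nat \<Rightarrow> nat) \<Rightarrow> monom" where
  "rs n a b = ((\<lambda>j. if j < n then a j else 0), (\<lambda>j. if j < n then b j else 0))"

definition rs2 :: "nat \<Rightarrow> nat \<Rightarrow> (nat \<Rightarrow> nat) \<Rightarrow> (nat \<Rightarrow> nat) \<Rightarrow> monom" where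
  "rs2 n i a b = ((fst (rs n a b))(i := Suc (a i)), (snd (rs n a b))(i := Suc (b i)))"

lemma rs_monset: "rs n a b \<in> monset n" unfolding rs_def monset_def by auto
lemma rs2_monset: "i < n \<Longrightarrow> rs2 n i a b \<in> monset n" unfolding rs2_def rs_def monset_def by auto

lemma monset_eq_iff:
  assumes "x \<in> monset n" "y \<in> monset n"
  shows "x = y \<longleftrightarrow> (\<forall>j<n. fst x j = fst y j \<and> snd x j = snd y j)"
proof -
  have "x = y \<longleftrightarrow> (\<forall>j. fst x j = fst y j \<and> snd x j = snd y j)"
    by (cases x, cases y) (auto simp: fun_eq_iff)
  also have "\<dots> \<longleftrightarrow> (\<forall>j<n. fst x j = fst y j \<and> snd x j = snd y j)"
    using assms unfolding monset_iff by (metis not_le)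
  finally show ?thesis .
qed

lemma ppg_formula:
  assumes i: "i < n"
  shows "prodlist (map (\<lambda>j. if j = i then gen1 j (a j) (b j) else mono1 j (a j) (b j)) [0..<n])
     = (\<lambda>x. emon (rs n a b) x - emon (rs2 n i a b) x :: 'k::field)"
proof
  fix x
  let ?h = "\<lambda>j. if j = i then gen1 j (a j) (b j) else mono1 j (a j) (b j) :: monom \<Rightarrow> 'k"
  have supp: "\<forall>j<n. \<forall>y. ?h j y \<noteq> 0 \<longrightarrow> (\<exists>c d. y = sing j c d)"
  proof (intro allI impI)
    fix j y assume "j < n" "?h j y \<noteq> 0"
    then show "\<exists>c d. y = sing j c d" using gen1_supp[of j "a j" "b j" y] mono1_supp[of j "a j" "b j" y]
      by (cases "j = i") auto
  qed
  show "prodlist (map ?h [0..<n]) x = emon (rs n a b) x - emon (rs2 n i a b) x"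
  proof (cases "x \<in> monset n")
    case False
    then have "x \<noteq> rs n a b" "x \<noteq> rs2 n i a b" using rs_monset rs2_monset[OF i] by auto
    then show ?thesis using False by (simp add: prodlist_formula0[OF supp] emon_def)
  next
    case True
    let ?P = "\<forall>j\<in>{..<n}-{i}. fst x j = a j \<and> snd x j = b j"
    have "(\<Prod>j<n. ?h j (sing j (fst x j) (snd x j))) = ?h i (sing i (fst x i) (snd x i)) * (\<Prod>j\<in>{..<n}-{i}. ?h j (sing j (fst x j) (snd x j)))"
      by (rule prod.remove) (use i in auto)
    also have "(\<Prod>j\<in>{..<n}-{i}. ?h j (sing j (fst x j) (snd x j))) = (\<Prod>j\<in>{..<n}-{i}. if fst x j = a j \<and> snd x j = b j then 1 else 0)"
      by (rule prod.cong) (auto simp: mono1_sing)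
    also have "\<dots> = (if ?P then 1 else 0)" by (rule prod_indic) simp
    finally have pe: "(\<Prod>j<n. ?h j (sing j (fst x j) (snd x j))) = ((if fst x i = a i \<and> snd x i = b i then 1 else 0) - (if fst x i = Suc (a i) \<and> snd x i = Suc (b i) then 1 else 0)) * (if ?P then 1 else 0)"
      by (simp add: gen1_sing)
    have e1: "x = rs n a b \<longleftrightarrow> ?P \<and> fst x i = a i \<and> snd x i = b i"
      unfolding monset_eq_iff[OF True rs_monset] using i by (auto simp: rs_def)
    have e2: "x = rs2 n i a b \<longleftrightarrow> ?P \<and> fst x i = Suc (a i) \<and> snd x i = Suc (b i)"
      unfolding monset_eq_iff[OF True rs2_monset[OF i]] using i by (auto simp: rs2_def rs_def)
    show ?thesis using True pe e1 e2 by (simp add: prodlist_formula0[OF supp] emon_def)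
  qed
qed

lemma phi_rs2: "i < n \<Longrightarrow> phi i (rs2 n i a b) = phi i (rs n a b)"
  unfolding phi_def rs2_def rs_def by (auto simp: fun_eq_iff)

lemma emon_diff_Kid:
  assumes "m1 \<in> monset n" "m2 \<in> monset n" "phi i m1 = phi i m2"
  shows "(\<lambda>x. emon m1 x - emon m2 x :: 'k::field) \<in> Kid n i"
proof -
  have "(\<lambda>x. 1 * emon m1 x + (-1) * emon m2 x :: 'k) \<in> Sn n" by (rule Sn_lin[OF emon_Sn[OF assms(1)] emon_Sn[OF assms(2)]])
  moreover have "push (phi i) (\<lambda>x. emon m1 x - 1 * emon m2 x :: 'k) z = 0" for z
    by (simp only: push_diff[OF emon_fin emon_fin] push_emon assms(3)) simp
  ultimately show ?thesis unfolding Kid_def by simp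
qed

lemma ppgen_Kid:
  assumes i: "i < n"
  shows "prodlist (map (\<lambda>j. if j = i then gen1 j (a j) (b j) else mono1 j (a j) (b j)) [0..<n]) \<in> (Kid n i :: (monom \<Rightarrow> 'k::field) set)"
  unfolding ppg_formula[OF i] using emon_diff_Kid[OF rs_monset rs2_monset[OF i] phi_rs2[OF i, symmetric]] .

lemma pp_sub_Kid:
  assumes i: "i < n"
  shows "pp n i \<subseteq> (Kid n i :: (monom \<Rightarrow> 'k::field) set)"
  unfolding pp_def by (rule span_sub_ideal[OF Kid_ideal]) (use ppgen_Kid[OF i] in blast)


declare split_paired_All[simp del] split_paired_Ex[simp del]

lemma descent:
  fixes L :: "monom \<Rightarrow> nat" and K W :: "(monom \<Rightarrow> 'k::field) set"
  assumes Kfin: "\<And>f. f \<in> K \<Longrightarrow> finite {x. f x \<noteq> 0}"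
    and Kclos: "\<And>f g c. f \<in> K \<Longrightarrow> g \<in> K \<Longrightarrow> (\<lambda>x. f x - c * g x) \<in> K"
    and W0: "(\<lambda>_. 0) \<in> W"
    and Wclos: "\<And>f g c. f \<in> W \<Longrightarrow> g \<in> W \<Longrightarrow> (\<lambda>x. f x + c * g x) \<in> W"
    and step: "\<And>f m. f \<in> K \<Longrightarrow> f m \<noteq> 0 \<Longrightarrow> (\<forall>x. f x \<noteq> 0 \<longrightarrow> L x \<le> L m) \<Longrightarrow>
       \<exists>g. g \<in> K \<and> g \<in> W \<and> g m \<noteq> 0 \<and> (\<forall>x. g x \<noteq> 0 \<longrightarrow> x \<noteq> m \<longrightarrow> L x < L m)"
  shows "K \<subseteq> W"
proof -
  have main: "\<forall>f. f \<in> K \<longrightarrow> (\<forall>x. f x \<noteq> 0 \<longrightarrow> L x \<le> M) \<longrightarrow> card {x. f x \<noteq> 0 \<and> L x = M} \<le> c \<longrightarrow> f \<in> W" for M c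
  proof (induction M arbitrary: c rule: less_induct)
    case (less M)
    show ?case
    proof (induction c)
      case 0
      show ?case
      proof (intro allI impI)
        fix f assume f: "f \<in> K" and le: "\<forall>x. f x \<noteq> 0 \<longrightarrow> L x \<le> M" and c: "card {x. f x \<noteq> 0 \<and> L x = M} \<le> 0"
        have fin: "finite {x. f x \<noteq> 0 \<and> L x = M}" using Kfin[OF f] by (rule finite_subset[rotated]) auto
        then have emp: "{x. f x \<noteq> 0 \<and> L x = M} = {}" using c by simp
        show "f \<in> W"
        proof (cases "M = 0")
          case True
          have "f = (\<lambda>_. 0)"
          proof (rule ext, rule ccontr)
            fix x assume "f x \<noteq> 0"
            moreover have "L x \<le> M" using le \<open>f x \<noteq> 0\<close> by blast
            ultimately have "x \<in> {x. f x \<noteq> 0 \<and> L x = M}" using True by simp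
            then show False using emp by simp
          qed
          then show ?thesis using W0 by simp
        next
          case False
          have le': "\<forall>x. f x \<noteq> 0 \<longrightarrow> L x \<le> M - 1"
          proof (intro allI impI)
            fix x
            assume fx: "f x \<noteq> 0"
            have "L x \<le> M" using le fx by blast
            moreover have "L x \<noteq> M" using emp fx by blast
            ultimately show "L x \<le> M - 1" by simp
          qed
          show ?thesis using less.IH[of "M - 1" "card {x. f x \<noteq> 0 \<and> L x = M - 1}"] False f le' by auto
        qed
      qed
    next
      case (Suc c)
      show ?case
      proof (intro allI impI)
        fix f assume f: "f \<in> K" and le: "\<forall>x. f x \<noteq> 0 \<longrightarrow> L x \<le> M" and c: "card {x. f x \<noteq> 0 \<and> L x = M} \<le> Suc c"
        let ?S = "{x. f x \<noteq> 0 \<and> L x = M}"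
        have fin: "finite ?S" using Kfin[OF f] by (rule finite_subset[rotated]) auto
        show "f \<in> W"
        proof (cases "card ?S \<le> c")
          case True then show ?thesis using Suc.IH f le by blast
        next
          case False
          have "?S \<noteq> {}"
          proof
            assume e: "?S = {}"
            have "card ?S = 0" by (simp only: e card.empty)
            then show False using False by simp
          qed
          then obtain m where "m \<in> ?S" by blast
          then have m: "f m \<noteq> 0" "L m = M" by simp_all
          obtain g where g: "g \<in> K" "g \<in> W" "g m \<noteq> 0" "\<forall>x. g x \<noteq> 0 \<longrightarrow> x \<noteq> m \<longrightarrow> L x < L m"
            using step[OF f m(1)] le m(2) by auto
          define f' where "f' = (\<lambda>x. f x - (f m / g m) * g x)"
          have f'K: "f' \<in> K" unfolding f'_def by (rule Kclos[OF f g(1)])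
          have f'm: "f' m = 0" unfolding f'_def using g(3) by simp
          have le': "\<forall>x. f' x \<noteq> 0 \<longrightarrow> L x \<le> M"
          proof (intro allI impI)
            fix x assume "f' x \<noteq> 0"
            then have "f x \<noteq> 0 \<or> g x \<noteq> 0" unfolding f'_def by auto
            then show "L x \<le> M" using le g(4) m(2) f'm \<open>f' x \<noteq> 0\<close> by (metis less_imp_le)
          qed
          have sub: "{x. f' x \<noteq> 0 \<and> L x = M} \<subseteq> ?S - {m}"
          proof
            fix x assume x: "x \<in> {x. f' x \<noteq> 0 \<and> L x = M}"
            then have xm: "x \<noteq> m" using f'm by auto
            then have "g x = 0" using g(4) x m(2) by auto
            then have "f x \<noteq> 0" using x unfolding f'_def by auto
            then show "x \<in> ?S - {m}" using x xm by auto
          qed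
          have "card {x. f' x \<noteq> 0 \<and> L x = M} \<le> card (?S - {m})"
            by (rule card_mono) (use fin sub in auto)
          also have "\<dots> = card ?S - 1" using m fin by (simp add: card_Diff_singleton)
          also have "\<dots> \<le> c" using c by simp
          finally have "f' \<in> W" using Suc.IH f'K le' by blast
          then have "(\<lambda>x. f' x + (f m / g m) * g x) \<in> W" by (rule Wclos[OF _ g(2)])
          moreover have "(\<lambda>x. f' x + (f m / g m) * g x) = f" unfolding f'_def by simp
          ultimately show ?thesis by simp
        qed
      qed
    qed
  qed
  show ?thesis
  proof
    fix f assume f: "f \<in> K"
    let ?M = "Max (insert 0 (L ` {x. f x \<noteq> 0}))"
    have "\<forall>x. f x \<noteq> 0 \<longrightarrow> L x \<le> ?M" using Kfin[OF f] by (auto intro!: Max_ge)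
    then show "f \<in> W" using main[of ?M "card {x. f x \<noteq> 0 \<and> L x = ?M}"] f by blast
  qed
qed

definition lvl :: "nat \<Rightarrow> monom \<Rightarrow> nat" where
  "lvl i x = min (fst x i) (snd x i)"

lemma phi_lvl_inj:
  assumes "phi i x = phi i y" "lvl i x = lvl i y"
  shows "x = y"
proof -
  have a: "(fst x)(i:=0) = (fst y)(i:=0)" "(snd x)(i:=0) = (snd y)(i:=0)"
    and d: "int (fst x i) - int (snd x i) = int (fst y i) - int (snd y i)"
    using assms(1) unfolding phi_def by auto
  have "fst x i = fst y i \<and> snd x i = snd y i" using d assms(2) unfolding lvl_def by linarith
  then have "fst x = fst y" "snd x = snd y" using a by (auto simp: fun_eq_iff) (metis fun_upd_apply)+
  then show ?thesis by (cases x, cases y) auto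
qed

lemma max_lvl_pos:
  assumes f: "f \<in> Kid n i" and m: "f m \<noteq> 0" and mx: "\<forall>x. f x \<noteq> 0 \<longrightarrow> lvl i x \<le> lvl i m"
  shows "lvl i m > 0"
proof (rule ccontr)
  assume "\<not> lvl i m > 0"
  then have l0: "lvl i m = 0" by simp
  have "\<forall>x. f x \<noteq> 0 \<longrightarrow> phi i x = phi i m \<longrightarrow> x = m"
    using mx l0 phi_lvl_inj by (metis le_zero_eq)
  then have "push (phi i) f (phi i m) = f m" using push_single by (metis (no_types, lifting))
  with KidD(2)[OF f] m show False by simp
qed

lemma Kid_sub_pp:
  assumes i: "i < n"
  shows "(Kid n i :: (monom \<Rightarrow> 'k::field) set) \<subseteq> pp n i"
proof (rule descent[where L = "lvl i"])
  show "\<And>f. f \<in> (Kid n i :: (monom \<Rightarrow> 'k) set) \<Longrightarrow> finite {x. f x \<noteq> 0}" using KidD(1) SnD(1) by blast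
  show "\<And>f g c. f \<in> (Kid n i :: (monom \<Rightarrow> 'k) set) \<Longrightarrow> g \<in> Kid n i \<Longrightarrow> (\<lambda>x. f x - c * g x) \<in> Kid n i"
    by (rule Kid_diff)
  show "(\<lambda>_. 0) \<in> (pp n i :: (monom \<Rightarrow> 'k) set)" unfolding pp_def by (rule span_zero)
  show "\<And>f g c. f \<in> (pp n i :: (monom \<Rightarrow> 'k) set) \<Longrightarrow> g \<in> pp n i \<Longrightarrow> (\<lambda>x. f x + c * g x) \<in> pp n i"
    unfolding pp_def by (rule span_lin)
  fix f :: "monom \<Rightarrow> 'k" and m
  assume f: "f \<in> Kid n i" and m: "f m \<noteq> 0" and mx: "\<forall>x. f x \<noteq> 0 \<longrightarrow> lvl i x \<le> lvl i m"
  have pos: "lvl i m > 0" by (rule max_lvl_pos[OF f m mx])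
  have mm: "m \<in> monset n" using SnD(2)[OF KidD(1)[OF f] m] .
  define a where "a = (fst m)(i := fst m i - 1)"
  define b where "b = (snd m)(i := snd m i - 1)"
  let ?g = "prodlist (map (\<lambda>j. if j = i then gen1 j (a j) (b j) else mono1 j (a j) (b j)) [0..<n]) :: monom \<Rightarrow> 'k"
  have r2: "rs2 n i a b = m"
    using mm pos unfolding rs2_def rs_def a_def b_def lvl_def monset_iff
    by (cases m) (auto simp: fun_eq_iff)
  have r1: "rs n a b \<noteq> m"
  proof
    assume "rs n a b = m"
    then have "fst (rs n a b) i = fst m i" by simp
    then show False using pos i unfolding rs_def a_def lvl_def by simp
  qed
  have lr: "lvl i (rs n a b) < lvl i m"
    using pos i unfolding rs_def a_def b_def lvl_def by auto
  show "\<exists>g :: monom \<Rightarrow> 'k. g \<in> Kid n i \<and> g \<in> pp n i \<and> g m \<noteq> 0 \<and> (\<forall>x. g x \<noteq> 0 \<longrightarrow> x \<noteq> m \<longrightarrow> lvl i x < lvl i m)"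
  proof -
    have h1: "?g \<in> Kid n i" by (rule ppgen_Kid[OF i])
    have h2: "?g \<in> pp n i" unfolding pp_def by (rule span_gen) blast
    have h3: "?g m \<noteq> 0" unfolding ppg_formula[OF i] using r1 r2 by (simp add: emon_def)
    have h4: "\<forall>x. ?g x \<noteq> 0 \<longrightarrow> x \<noteq> m \<longrightarrow> lvl i x < lvl i m"
      unfolding ppg_formula[OF i] using r2 lr by (auto simp: emon_def split: if_splits)
    show ?thesis using h1 h2 h3 h4 by blast
  qed
qed

lemma pp_eq_Kid: "i < n \<Longrightarrow> pp n i = (Kid n i :: (monom \<Rightarrow> 'k::field) set)"
  using pp_sub_Kid Kid_sub_pp by blast


definition E :: "nat \<Rightarrow> monom \<Rightarrow> 'k::field" where "E j = gen1 j 0 0"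

definition upd :: "monom \<Rightarrow> nat \<Rightarrow> nat \<Rightarrow> nat \<Rightarrow> monom" where
  "upd x j s t = ((fst x)(j := s), (snd x)(j := t))"

lemma sing00: "sing j 0 0 = zm" unfolding sing_def by auto

lemma E_eq: "E j = (\<lambda>x. 1 * emon zm x + (-1) * emon (sing j 1 1) x)"
  unfolding E_def gen1_def by (auto simp: sing00)

lemma E_Sn: "j < n \<Longrightarrow> (E j :: monom \<Rightarrow> 'k::field) \<in> Sn n"
  unfolding E_def by (rule gen1_Sn)

lemma mmul_s11_right:
  "mmul p (sing j 1 1) = ((fst p)(j := fst p j + (1 - snd p j)), (snd p)(j := 1 + (snd p j - 1)))"
  unfolding mmul_def sing_def by (auto simp: fun_eq_iff)

lemma mmul_s11_left:
  "mmul (sing j 1 1) q = ((fst q)(j := 1 + (fst q j - 1)), (snd q)(j := snd q j + (1 - fst q j)))"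
  unfolding mmul_def sing_def by (auto simp: fun_eq_iff)

lemma pair_eqI: "fst x = fst y \<Longrightarrow> snd x = snd y \<Longrightarrow> x = (y::monom)"
  by (cases x, cases y) auto

lemma preimg_right:
  "{p. mmul p (sing j 1 1) = x} =
    (if snd x j = 0 then {} else if snd x j = 1 \<and> fst x j \<ge> 1 then {x, upd x j (fst x j - 1) 0} else {x})"
  (is "?A = ?B")
proof (rule set_eqI)
  fix p
  have "p \<in> ?A \<longleftrightarrow> fst x = (fst p)(j := fst p j + (1 - snd p j)) \<and> snd x = (snd p)(j := 1 + (snd p j - 1))"
    unfolding mmul_s11_right by (cases x) auto
  also have "\<dots> \<longleftrightarrow> p \<in> ?B"
  proof
    assume h: "fst x = (fst p)(j := fst p j + (1 - snd p j)) \<and> snd x = (snd p)(j := 1 + (snd p j - 1))"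
    then have o1: "\<And>i. i \<noteq> j \<Longrightarrow> fst x i = fst p i" "\<And>i. i \<noteq> j \<Longrightarrow> snd x i = snd p i"
      and xj: "fst x j = fst p j + (1 - snd p j)" "snd x j = 1 + (snd p j - 1)" by auto
    show "p \<in> ?B"
    proof (cases "snd p j = 0")
      case True
      have "fst p = (fst x)(j := fst x j - 1)"
      proof fix i show "fst p i = ((fst x)(j := fst x j - 1)) i" by (cases "i = j") (use o1 xj True in auto) qed
      moreover have "snd p = (snd x)(j := 0)"
      proof fix i show "snd p i = ((snd x)(j := 0)) i" by (cases "i = j") (use o1 xj True in auto) qed
      ultimately have "p = upd x j (fst x j - 1) 0" unfolding upd_def by (intro pair_eqI) auto
      moreover have "snd x j = 1" "fst x j \<ge> 1" using xj True by auto
      ultimately show ?thesis by simp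
    next
      case False
      have "fst p = fst x"
      proof fix i show "fst p i = fst x i" by (cases "i = j") (use o1 xj False in auto) qed
      moreover have "snd p = snd x"
      proof fix i show "snd p i = snd x i" by (cases "i = j") (use o1 xj False in auto) qed
      ultimately have "p = x" by (intro pair_eqI) auto
      moreover have "snd x j \<noteq> 0" using xj by simp
      ultimately show ?thesis by auto
    qed
  next
    assume "p \<in> ?B"
    then show "fst x = (fst p)(j := fst p j + (1 - snd p j)) \<and> snd x = (snd p)(j := 1 + (snd p j - 1))"
      by (auto simp: upd_def fun_eq_iff split: if_splits)
  qed
  finally show "p \<in> ?A \<longleftrightarrow> p \<in> ?B" .
qed

lemma preimg_left:
  "{q. mmul (sing j 1 1) q = x} =
    (if fst x j = 0 then {} else if fst x j = 1 \<and> snd x j \<ge> 1 then {x, upd x j 0 (snd x j - 1)} else {x})"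
  (is "?A = ?B")
proof (rule set_eqI)
  fix p
  have "p \<in> ?A \<longleftrightarrow> fst x = (fst p)(j := 1 + (fst p j - 1)) \<and> snd x = (snd p)(j := snd p j + (1 - fst p j))"
    unfolding mmul_s11_left by (cases x) auto
  also have "\<dots> \<longleftrightarrow> p \<in> ?B"
  proof
    assume h: "fst x = (fst p)(j := 1 + (fst p j - 1)) \<and> snd x = (snd p)(j := snd p j + (1 - fst p j))"
    then have o1: "\<And>i. i \<noteq> j \<Longrightarrow> fst x i = fst p i" "\<And>i. i \<noteq> j \<Longrightarrow> snd x i = snd p i"
      and xj: "fst x j = 1 + (fst p j - 1)" "snd x j = snd p j + (1 - fst p j)" by auto
    show "p \<in> ?B"
    proof (cases "fst p j = 0")
      case True
      have "fst p = (fst x)(j := 0)"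
      proof fix i show "fst p i = ((fst x)(j := 0)) i" by (cases "i = j") (use o1 xj True in auto) qed
      moreover have "snd p = (snd x)(j := snd x j - 1)"
      proof fix i show "snd p i = ((snd x)(j := snd x j - 1)) i" by (cases "i = j") (use o1 xj True in auto) qed
      ultimately have "p = upd x j 0 (snd x j - 1)" unfolding upd_def by (intro pair_eqI) auto
      moreover have "fst x j = 1" "snd x j \<ge> 1" using xj True by auto
      ultimately show ?thesis by simp
    next
      case False
      have "fst p = fst x"
      proof fix i show "fst p i = fst x i" by (cases "i = j") (use o1 xj False in auto) qed
      moreover have "snd p = snd x"
      proof fix i show "snd p i = snd x i" by (cases "i = j") (use o1 xj False in auto) qed
      ultimately have "p = x" by (intro pair_eqI) auto
      moreover have "fst x j \<noteq> 0" using xj by simp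
      ultimately show ?thesis by auto
    qed
  next
    assume "p \<in> ?B"
    then show "fst x = (fst p)(j := 1 + (fst p j - 1)) \<and> snd x = (snd p)(j := snd p j + (1 - fst p j))"
      by (auto simp: upd_def fun_eq_iff split: if_splits)
  qed
  finally show "p \<in> ?A \<longleftrightarrow> p \<in> ?B" .
qed

lemma upd_ne: "t \<noteq> snd x j \<Longrightarrow> upd x j s t \<noteq> x"
  unfolding upd_def by (cases x) (auto simp: fun_eq_iff)
lemma upd_ne': "s \<noteq> fst x j \<Longrightarrow> upd x j s t \<noteq> x"
  unfolding upd_def by (cases x) (auto simp: fun_eq_iff)

lemma E_right:
  assumes g: "finite {x. g x \<noteq> 0}"
  shows "Smult g (E j) x = (if snd x j = 0 then g x else if snd x j = 1 \<and> fst x j \<ge> 1 then - g (upd x j (fst x j - 1) 0) else (0::'k::field))"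
proof -
  have "Smult g (E j) = (\<lambda>x. 1 * Smult g (emon zm) x + (-1) * Smult g (emon (sing j 1 1)) x)"
    unfolding E_eq by (rule Smult_lin_right[OF g emon_fin emon_fin])
  moreover have "Smult g (emon zm) = g"
  proof -
    have "(\<lambda>p. mmul p zm) = (\<lambda>p. p)" by (rule ext) simp
    then show ?thesis using Smult_emon_right[OF g, of zm] by simp
  qed
  moreover have "Smult g (emon (sing j 1 1)) x = sum g {p. mmul p (sing j 1 1) = x}"
    unfolding Smult_emon_right[OF g] by (rule push_preimage[OF refl]) (subst preimg_right, simp)
  ultimately have e: "Smult g (E j) x = g x - sum g {p. mmul p (sing j 1 1) = x}" by simp
  show ?thesis unfolding e preimg_right using upd_ne[of 0 x j "fst x j - 1"] by auto
qed

lemma E_left: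
  assumes g: "finite {x. g x \<noteq> 0}"
  shows "Smult (E j) g x = (if fst x j = 0 then g x else if fst x j = 1 \<and> snd x j \<ge> 1 then - g (upd x j 0 (snd x j - 1)) else (0::'k::field))"
proof -
  have "Smult (E j) g = (\<lambda>x. 1 * Smult (emon zm) g x + (-1) * Smult (emon (sing j 1 1)) g x)"
    unfolding E_eq by (rule Smult_lin_left[OF emon_fin emon_fin g])
  moreover have "Smult (emon zm) g = g" using Smult_Sone_left[OF g] by (simp add: Sone_emon)
  moreover have "Smult (emon (sing j 1 1)) g x = sum g {q. mmul (sing j 1 1) q = x}"
    unfolding Smult_emon_left[OF g] by (rule push_preimage[OF refl]) (subst preimg_left, simp)
  ultimately have e: "Smult (E j) g x = g x - sum g {q. mmul (sing j 1 1) q = x}" by simp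
  show ?thesis unfolding e preimg_left using upd_ne'[of 0 x j "snd x j - 1"] by auto
qed


fun rw :: "nat list \<Rightarrow> (monom \<Rightarrow> 'k::field) \<Rightarrow> monom \<Rightarrow> 'k" where
  "rw [] g = g" | "rw (j#js) g = Smult (rw js g) (E j)"
fun lw :: "nat list \<Rightarrow> (monom \<Rightarrow> 'k::field) \<Rightarrow> monom \<Rightarrow> 'k" where
  "lw [] g = g" | "lw (j#js) g = Smult (E j) (lw js g)"
fun sw :: "nat list \<Rightarrow> (monom \<Rightarrow> 'k::field) \<Rightarrow> monom \<Rightarrow> 'k" where
  "sw [] g = g" | "sw (j#js) g = Smult (E j) (Smult (sw js g) (E j))"

lemma upd_simps[simp]: "fst (upd x j s t) j = s" "snd (upd x j s t) j = t"
  "i \<noteq> j \<Longrightarrow> fst (upd x j s t) i = fst x i" "i \<noteq> j \<Longrightarrow> snd (upd x j s t) i = snd x i"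
  unfolding upd_def by auto

lemma rw_ideal: "is_ideal n I \<Longrightarrow> g \<in> I \<Longrightarrow> set js \<subseteq> {..<n} \<Longrightarrow> rw js g \<in> (I :: (monom \<Rightarrow> 'k::field) set)"
  by (induction js) (auto intro: idealD(6) E_Sn)
lemma lw_ideal: "is_ideal n I \<Longrightarrow> g \<in> I \<Longrightarrow> set js \<subseteq> {..<n} \<Longrightarrow> lw js g \<in> (I :: (monom \<Rightarrow> 'k::field) set)"
  by (induction js) (auto intro: idealD(5) E_Sn)
lemma sw_ideal: "is_ideal n I \<Longrightarrow> g \<in> I \<Longrightarrow> set js \<subseteq> {..<n} \<Longrightarrow> sw js g \<in> (I :: (monom \<Rightarrow> 'k::field) set)"
proof (induction js)
  case (Cons j js)
  then have a: "sw js g \<in> I" "j < n" by auto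
  show ?case using idealD(5)[OF Cons.prems(1) idealD(6)[OF Cons.prems(1) a(1) E_Sn[OF a(2)]] E_Sn[OF a(2)]] by simp
qed simp

lemma E_fin: "finite {x. (E j :: monom \<Rightarrow> 'k::field) x \<noteq> 0}"
  using SnD(1)[OF E_Sn[OF lessI]] .

lemma rw_fin: "finite {x. g x \<noteq> 0} \<Longrightarrow> finite {x. rw js g x \<noteq> (0::'k::field)}"
  by (induction js) (auto intro: Smult_fin E_fin)
lemma lw_fin: "finite {x. g x \<noteq> 0} \<Longrightarrow> finite {x. lw js g x \<noteq> (0::'k::field)}"
  by (induction js) (auto intro: Smult_fin E_fin)
lemma sw_fin: "finite {x. g x \<noteq> 0} \<Longrightarrow> finite {x. sw js g x \<noteq> (0::'k::field)}"
  by (induction js) (auto intro!: Smult_fin E_fin)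

lemma rw_R1:
  assumes g: "finite {x. g x \<noteq> 0}" and x: "\<forall>j\<in>set js. fst x j = 0 \<and> snd x j = 0"
  shows "rw js g x = (g x :: 'k::field)"
  using x by (induction js) (auto simp: E_right[OF rw_fin[OF g]])

lemma rw_R2:
  assumes g: "finite {x. g x \<noteq> 0}"
  shows "\<And>x. \<exists>j\<in>set js. fst x j = 0 \<and> snd x j \<noteq> 0 \<Longrightarrow> rw js g x = (0 :: 'k::field)"
proof (induction js)
  case Nil then show ?case by simp
next
  case (Cons j js)
  from Cons.prems obtain i where i: "i \<in> set (j#js)" "fst x i = 0" "snd x i \<noteq> 0" by blast
  show ?case
  proof (cases "i = j")
    case True
    then have "fst x j = 0" "snd x j \<noteq> 0" using i by simp_all
    then show ?thesis by (simp add: E_right[OF rw_fin[OF g]])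
  next
    case False
    then have ijs: "i \<in> set js" using i by simp
    have a: "rw js g x = 0" using Cons.IH ijs i by blast
    have b: "\<And>s. rw js g (upd x j s 0) = 0" using Cons.IH ijs i False by (metis upd_simps(3,4))
    show ?thesis by (simp add: E_right[OF rw_fin[OF g]] a b)
  qed
qed

lemma lw_L1:
  assumes g: "finite {x. g x \<noteq> 0}" and x: "\<forall>j\<in>set js. fst x j = 0 \<and> snd x j = 0"
  shows "lw js g x = (g x :: 'k::field)"
  using x by (induction js) (auto simp: E_left[OF lw_fin[OF g]])

lemma lw_L2:
  assumes g: "finite {x. g x \<noteq> 0}"
  shows "\<And>x. \<exists>j\<in>set js. snd x j = 0 \<and> fst x j \<noteq> 0 \<Longrightarrow> lw js g x = (0 :: 'k::field)"
proof (induction js)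
  case Nil then show ?case by simp
next
  case (Cons j js)
  from Cons.prems obtain i where i: "i \<in> set (j#js)" "snd x i = 0" "fst x i \<noteq> 0" by blast
  show ?case
  proof (cases "i = j")
    case True
    then have "snd x j = 0" "fst x j \<noteq> 0" using i by simp_all
    then show ?thesis by (simp add: E_left[OF lw_fin[OF g]])
  next
    case False
    then have ijs: "i \<in> set js" using i by simp
    have a: "lw js g x = 0" using Cons.IH ijs i by blast
    have b: "\<And>s. lw js g (upd x j 0 s) = 0" using Cons.IH ijs i False by (metis upd_simps(3,4))
    show ?thesis by (simp add: E_left[OF lw_fin[OF g]] a b)
  qed
qed

definition ec :: "nat \<Rightarrow> nat \<Rightarrow> 'k::field" where
  "ec s t = (if s = 0 \<and> t = 0 then 1 else if s = 1 \<and> t = 1 then -1 else 0)"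

lemma ec_simps[simp]: "ec 0 0 = 1" "ec 1 1 = -1" "ec (Suc 0) (Suc 0) = -1"
  unfolding ec_def by auto

definition zr :: "nat list \<Rightarrow> monom \<Rightarrow> monom" where
  "zr js x = ((\<lambda>i. if i \<in> set js then 0 else fst x i), (\<lambda>i. if i \<in> set js then 0 else snd x i))"

lemma sandwich1:
  assumes h: "finite {x. h x \<noteq> 0}"
  shows "Smult (E j) (Smult h (E j)) x = (if fst x j = 0 \<and> snd x j = 0 then h x
     else if fst x j = 1 \<and> snd x j = 1 then - h (upd x j 0 0) else (0::'k::field))"
proof -
  have f1: "finite {x. Smult h (E j) x \<noteq> 0}" by (rule Smult_fin[OF h E_fin])
  have u: "upd (upd x j 0 0) j 0 0 = upd x j 0 0" unfolding upd_def by simp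
  show ?thesis
    by (simp add: E_left[OF f1] E_right[OF h])
qed

lemma sw_formula:
  assumes g: "finite {x. g x \<noteq> 0}"
  shows "\<And>x. distinct js \<Longrightarrow> sw js g x = (\<Prod>j\<in>set js. ec (fst x j) (snd x j)) * (g (zr js x) :: 'k::field)"
proof (induction js)
  case Nil
  have "zr [] x = x" unfolding zr_def by simp
  then show ?case by simp
next
  case (Cons j js)
  have jn: "j \<notin> set js" and d: "distinct js" using Cons.prems by auto
  have sw: "sw (j#js) g x = (if fst x j = 0 \<and> snd x j = 0 then sw js g x
     else if fst x j = 1 \<and> snd x j = 1 then - sw js g (upd x j 0 0) else 0)"
    by (simp add: sandwich1[OF sw_fin[OF g]])
  have pr: "(\<Prod>i\<in>set (j#js). ec (fst x i) (snd x i)) = ec (fst x j) (snd x j) * (\<Prod>i\<in>set js. ec (fst x i) (snd x i))"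
    using jn by simp
  show ?case
  proof (cases "fst x j = 0 \<and> snd x j = 0")
    case True
    have z: "zr (j#js) x = zr js x" unfolding zr_def using True by (auto simp: fun_eq_iff)
    have e: "ec (fst x j) (snd x j) = 1" using True by (simp add: ec_def)
    have "sw (j#js) g x = sw js g x" using sw True by simp
    also have "\<dots> = (\<Prod>j\<in>set js. ec (fst x j) (snd x j)) * g (zr js x)" by (rule Cons.IH[OF d])
    also have "\<dots> = (\<Prod>i\<in>set (j#js). ec (fst x i) (snd x i)) * g (zr (j#js) x)"
      unfolding pr e z by simp
    finally show ?thesis .
  next
    case F1: False
    show ?thesis
    proof (cases "fst x j = 1 \<and> snd x j = 1")
      case True
      have z: "zr js (upd x j 0 0) = zr (j#js) x" unfolding zr_def upd_def by (auto simp: fun_eq_iff)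
      have p: "(\<Prod>i\<in>set js. ec (fst (upd x j 0 0) i) (snd (upd x j 0 0) i)) = (\<Prod>i\<in>set js. ec (fst x i) (snd x i))"
      proof (rule prod.cong[OF refl])
        fix i assume "i \<in> set js"
        then have "i \<noteq> j" using jn by auto
        then show "ec (fst (upd x j 0 0) i) (snd (upd x j 0 0) i) = ec (fst x i) (snd x i)" by simp
      qed
      have e: "ec (fst x j) (snd x j) = -1" using True by (simp add: ec_def)
      have "sw (j#js) g x = - sw js g (upd x j 0 0)" using sw True F1 by simp
      also have "\<dots> = - ((\<Prod>i\<in>set js. ec (fst (upd x j 0 0) i) (snd (upd x j 0 0) i)) * g (zr js (upd x j 0 0)))"
        by (simp only: Cons.IH[OF d])
      also have "\<dots> = (\<Prod>i\<in>set (j#js). ec (fst x i) (snd x i)) * g (zr (j#js) x)"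
        unfolding pr e z p by simp
      finally show ?thesis .
    next
      case False
      then have e: "ec (fst x j) (snd x j) = 0" using F1 by (simp add: ec_def)
      have "sw (j#js) g x = 0" unfolding sw using F1 False by presburger
      also have "\<dots> = (\<Prod>i\<in>set (j#js). ec (fst x i) (snd x i)) * g (zr (j#js) x)"
        unfolding pr e by simp
      finally show ?thesis .
    qed
  qed
qed


definition Gf :: "nat \<Rightarrow> (nat \<Rightarrow> nat) \<Rightarrow> (nat \<Rightarrow> nat) \<Rightarrow> monom \<Rightarrow> 'k::field" where
  "Gf n a b = prodlist (map (\<lambda>j. gen1 j (a j) (b j)) [0..<n])"

definition Efun :: "nat \<Rightarrow> monom \<Rightarrow> 'k::field" where
  "Efun n = Gf n (\<lambda>_. 0) (\<lambda>_. 0)"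

lemma Gf_formula:
  "Gf n a b x = (if x \<in> monset n then \<Prod>j<n. ((if fst x j = a j \<and> snd x j = b j then 1 else 0)
      - (if fst x j = Suc (a j) \<and> snd x j = Suc (b j) then 1 else (0::'k::field))) else 0)"
proof -
  have "\<forall>j<n. \<forall>y. (gen1 j (a j) (b j) :: monom \<Rightarrow> 'k) y \<noteq> 0 \<longrightarrow> (\<exists>c d. y = sing j c d)"
    using gen1_supp by blast
  then show ?thesis unfolding Gf_def by (simp add: prodlist_formula0 gen1_sing)
qed

lemma Efun_formula:
  "Efun n x = (if x \<in> monset n then \<Prod>j<n. ec (fst x j) (snd x j) else (0::'k::field))"
  unfolding Efun_def Gf_formula by (auto simp: ec_def intro!: prod.cong)

lemma Gf_Sn: "(Gf n a b :: monom \<Rightarrow> 'k::field) \<in> Sn n"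
  unfolding Gf_def by (rule prodlist_Sn) (auto intro: gen1_Sn)

lemma Efun_Sn: "(Efun n :: monom \<Rightarrow> 'k::field) \<in> Sn n"
  unfolding Efun_def by (rule Gf_Sn)

definition tau :: "(nat \<Rightarrow> nat) \<Rightarrow> (nat \<Rightarrow> nat) \<Rightarrow> monom \<Rightarrow> monom" where
  "tau a b p = mmul (mmul ((\<lambda>_. 0), a) p) (b, (\<lambda>_. 0))"

lemma tau_zero: "tau a b p = zm \<longleftrightarrow> (\<forall>j. fst p j \<le> a j \<and> snd p j + a j = b j + fst p j)"
proof -
  have "tau a b p = zm \<longleftrightarrow> (\<forall>j. (fst p j - a j) + (b j - (snd p j + (a j - fst p j))) = 0 \<and> (snd p j + (a j - fst p j)) - b j = 0)"
    unfolding tau_def mmul_def by (auto simp: fun_eq_iff)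
  also have "\<dots> \<longleftrightarrow> (\<forall>j. fst p j \<le> a j \<and> snd p j + a j = b j + fst p j)"
    by (intro all_cong1) arith
  finally show ?thesis .
qed

lemma tau_push:
  assumes f: "finite {x. f x \<noteq> 0}"
  shows "Smult (Smult (emon ((\<lambda>_. 0), a)) f) (emon (b, (\<lambda>_. 0))) = push (tau a b) (f :: monom \<Rightarrow> 'k::field)"
proof -
  have "Smult (Smult (emon ((\<lambda>_. 0), a)) f) (emon (b, (\<lambda>_. 0))) = push (\<lambda>p. mmul p (b, (\<lambda>_. 0))) (push (mmul ((\<lambda>_. 0), a)) f)"
    unfolding Smult_emon_left[OF f] by (rule Smult_emon_right[OF finite_supp_push[OF f]])
  also have "\<dots> = push ((\<lambda>p. mmul p (b, (\<lambda>_. 0))) \<circ> mmul ((\<lambda>_. 0), a)) f" by (rule push_comp[OF f])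
  also have "(\<lambda>p. mmul p (b, (\<lambda>_. 0))) \<circ> mmul ((\<lambda>_. 0), a) = tau a b" unfolding tau_def by auto
  finally show ?thesis .
qed

lemma sumfst_monset_eq:
  assumes p: "p \<in> monset n" and m: "m \<in> monset n" and le: "\<forall>j. fst p j \<le> fst m j"
    and s: "(\<Sum>j<n. fst m j) \<le> (\<Sum>j<n. fst p j)"
  shows "fst p = fst m"
proof
  fix j
  show "fst p j = fst m j"
  proof (cases "j < n")
    case True
    have "(\<Sum>j<n. fst p j) \<le> (\<Sum>j<n. fst m j)" by (rule sum_mono) (use le in auto)
    then have "(\<Sum>j<n. fst p j) = (\<Sum>j<n. fst m j)" using s by simp
    then show ?thesis by (rule sum_mono_inv) (use le True in auto)
  next
    case False then show ?thesis using p m unfolding monset_iff by auto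
  qed
qed

lemma extract_coeff:
  assumes fS: "f \<in> Sn n" and m: "f m \<noteq> 0"
    and mn: "\<forall>p. f p \<noteq> 0 \<longrightarrow> (\<Sum>j<n. fst m j) \<le> (\<Sum>j<n. fst p j)"
  shows "push (tau (fst m) (snd m)) f zm = (f m :: 'k::field)"
proof -
  have mm: "m \<in> monset n" using SnD(2)[OF fS m] .
  have uniq: "\<forall>p. f p \<noteq> 0 \<longrightarrow> tau (fst m) (snd m) p = zm \<longrightarrow> p = m"
  proof (intro allI impI)
    fix p assume fp: "f p \<noteq> 0" and t: "tau (fst m) (snd m) p = zm"
    have pm: "p \<in> monset n" using SnD(2)[OF fS fp] .
    have c: "\<forall>j. fst p j \<le> fst m j \<and> snd p j + fst m j = snd m j + fst p j" using t tau_zero by blast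
    have e1: "fst p = fst m" by (rule sumfst_monset_eq[OF pm mm]) (use c mn fp in auto)
    have e2: "snd p = snd m"
    proof fix j show "snd p j = snd m j" using c e1 by (metis add_right_cancel) qed
    show "p = m" using e1 e2 by (rule pair_eqI)
  qed
  have "tau (fst m) (snd m) m = zm" unfolding tau_zero by simp
  then show ?thesis using push_single[OF uniq] by simp
qed

lemma zm_ne_monset: "x \<notin> monset n \<Longrightarrow> x \<noteq> zm" by auto

lemma Efun_in_ideal:
  assumes I: "is_ideal n I" and f: "f \<in> I" and nz: "f \<noteq> (\<lambda>_. 0)"
  shows "(Efun n :: monom \<Rightarrow> 'k::field) \<in> I"
proof -
  have fS: "f \<in> Sn n" using idealD(1)[OF I] f by blast
  let ?S = "{x. f x \<noteq> 0}" let ?s = "\<lambda>p. \<Sum>j<n. fst p j"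
  have fin: "finite ?S" using SnD(1)[OF fS] .
  have ne: "?S \<noteq> {}" using nz by auto
  have "Min (?s ` ?S) \<in> ?s ` ?S" using fin ne by simp
  then obtain m where m: "m \<in> ?S" "?s m = Min (?s ` ?S)" by auto
  have mn: "\<forall>p. f p \<noteq> 0 \<longrightarrow> ?s m \<le> ?s p" using m(2) fin by simp
  have mm: "m \<in> monset n" using SnD(2)[OF fS] m(1) by simp
  have e1: "emon ((\<lambda>_. 0), fst m) \<in> (Sn n :: (monom \<Rightarrow> 'k) set)"
    by (rule emon_Sn) (use mm in \<open>auto simp: monset_iff\<close>)
  have e2: "emon (snd m, (\<lambda>_. 0)) \<in> (Sn n :: (monom \<Rightarrow> 'k) set)"
    by (rule emon_Sn) (use mm in \<open>auto simp: monset_iff\<close>)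
  define g1 where "g1 = Smult (Smult (emon ((\<lambda>_. 0), fst m)) f) (emon (snd m, (\<lambda>_. 0)))"
  have g1I: "g1 \<in> I" unfolding g1_def by (rule idealD(6)[OF I idealD(5)[OF I f e1] e2])
  have g1S: "g1 \<in> Sn n" using idealD(1)[OF I] g1I by blast
  have g1z: "g1 zm = f m" unfolding g1_def tau_push[OF fin] using extract_coeff[OF fS _ mn] m(1) by simp
  define h where "h = sw [0..<n] g1"
  have hI: "h \<in> I" unfolding h_def by (rule sw_ideal[OF I g1I]) auto
  have heq: "h = (\<lambda>x. f m * Efun n x)"
  proof
    fix x
    have hx: "h x = (\<Prod>j\<in>{..<n}. ec (fst x j) (snd x j)) * g1 (zr [0..<n] x)"
      unfolding h_def using sw_formula[OF SnD(1)[OF g1S], of "[0..<n]" x] by (simp add: atLeast0LessThan)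
    show "h x = f m * Efun n x"
    proof (cases "x \<in> monset n")
      case True
      then have "zr [0..<n] x = zm" unfolding zr_def monset_iff by (auto simp: fun_eq_iff)
      then show ?thesis using hx True g1z by (simp add: Efun_formula)
    next
      case False
      then have "zr [0..<n] x \<notin> monset n" unfolding zr_def monset_iff by auto
      then have "g1 (zr [0..<n] x) = 0" using SnD(2)[OF g1S] by blast
      then show ?thesis using hx False by (simp add: Efun_formula)
    qed
  qed
  have "(\<lambda>x. (1 / f m) * h x) \<in> I" by (rule ideal_scale[OF I hI])
  moreover have "(\<lambda>x. (1 / f m) * h x) = Efun n" unfolding heq using m(1) by auto
  ultimately show ?thesis by simp
qed


definition sig :: "(nat \<Rightarrow> nat) \<Rightarrow> (nat \<Rightarrow> nat) \<Rightarrow> monom \<Rightarrow> monom" where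
  "sig a b p = mmul (mmul (a, (\<lambda>_. 0)) p) ((\<lambda>_. 0), b)"

lemma sig_eq: "sig a b p = ((\<lambda>j. a j + fst p j), (\<lambda>j. b j + snd p j))"
  unfolding sig_def mmul_def by auto

lemma sig_push:
  assumes f: "finite {x. f x \<noteq> 0}"
  shows "Smult (Smult (emon (a, (\<lambda>_. 0))) f) (emon ((\<lambda>_. 0), b)) = push (sig a b) (f :: monom \<Rightarrow> 'k::field)"
proof -
  have "Smult (Smult (emon (a, (\<lambda>_. 0))) f) (emon ((\<lambda>_. 0), b)) = push (\<lambda>p. mmul p ((\<lambda>_. 0), b)) (push (mmul (a, (\<lambda>_. 0))) f)"
    unfolding Smult_emon_left[OF f] by (rule Smult_emon_right[OF finite_supp_push[OF f]])
  also have "\<dots> = push ((\<lambda>p. mmul p ((\<lambda>_. 0), b)) \<circ> mmul (a, (\<lambda>_. 0))) f" by (rule push_comp[OF f])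
  also have "(\<lambda>p. mmul p ((\<lambda>_. 0), b)) \<circ> mmul (a, (\<lambda>_. 0)) = sig a b" unfolding sig_def by auto
  finally show ?thesis .
qed

lemma Gf_shift:
  fixes a b :: "nat \<Rightarrow> nat" and n :: nat
  defines "ra \<equiv> fst (rs n a b)" and "rb \<equiv> snd (rs n a b)"
  shows "(Gf n a b :: monom \<Rightarrow> 'k::field) = push (sig ra rb) (Efun n)"
proof
  fix x
  show "Gf n a b x = (push (sig ra rb) (Efun n) x :: 'k)"
  proof (cases "\<forall>j. ra j \<le> fst x j \<and> rb j \<le> snd x j")
    case True
    define p0 where "p0 = ((\<lambda>j. fst x j - ra j), (\<lambda>j. snd x j - rb j))"
    have sp0: "sig ra rb p0 = x" unfolding sig_eq p0_def using True by (intro pair_eqI) auto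
    have uniq: "\<forall>p. (Efun n p :: 'k) \<noteq> 0 \<longrightarrow> sig ra rb p = x \<longrightarrow> p = p0"
    proof (intro allI impI)
      fix p assume "sig ra rb p = x"
      then have "fst x = (\<lambda>j. ra j + fst p j)" "snd x = (\<lambda>j. rb j + snd p j)" unfolding sig_eq by auto
      then show "p = p0" unfolding p0_def by (intro pair_eqI) auto
    qed
    have pv: "push (sig ra rb) (Efun n) x = (Efun n p0 :: 'k)" using push_single[OF uniq] sp0 by simp
    have rz: "\<And>j. n \<le> j \<Longrightarrow> ra j = 0 \<and> rb j = 0" unfolding ra_def rb_def rs_def by auto
    have mon: "p0 \<in> monset n \<longleftrightarrow> x \<in> monset n" unfolding p0_def monset_iff using rz by auto
    show ?thesis
    proof (cases "x \<in> monset n")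
      case False
      have g0: "Gf n a b x = (0::'k)" using False by (simp add: Gf_formula)
      have e0: "Efun n p0 = (0::'k)" using mon False by (simp add: Efun_formula)
      show ?thesis unfolding g0 pv e0 ..
    next
      case xm: True
      have "(\<Prod>j<n. ec (fst p0 j) (snd p0 j)) = (\<Prod>j<n. ((if fst x j = a j \<and> snd x j = b j then 1 else 0)
          - (if fst x j = Suc (a j) \<and> snd x j = Suc (b j) then 1 else (0::'k))))"
      proof (rule prod.cong[OF refl])
        fix j assume "j \<in> {..<n}"
        then have j: "ra j = a j" "rb j = b j" unfolding ra_def rb_def rs_def by auto
        have le: "a j \<le> fst x j" "b j \<le> snd x j" using True j by metis+
        show "ec (fst p0 j) (snd p0 j) = (if fst x j = a j \<and> snd x j = b j then 1 else 0)
          - (if fst x j = Suc (a j) \<and> snd x j = Suc (b j) then 1 else (0::'k))"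
          unfolding p0_def ec_def using j le by auto
      qed
      note pe = this
      have "Gf n a b x = (\<Prod>j<n. ((if fst x j = a j \<and> snd x j = b j then 1 else 0)
          - (if fst x j = Suc (a j) \<and> snd x j = Suc (b j) then 1 else (0::'k))))"
        using xm by (simp add: Gf_formula)
      also have "\<dots> = (\<Prod>j<n. ec (fst p0 j) (snd p0 j))" using pe by simp
      also have "\<dots> = (Efun n p0 :: 'k)" using mon xm by (simp add: Efun_formula)
      also have "\<dots> = push (sig ra rb) (Efun n) x" by (rule pv[symmetric])
      finally show ?thesis .
    qed
  next
    case False
    then obtain j where j: "\<not> (ra j \<le> fst x j \<and> rb j \<le> snd x j)" by blast
    have "{p. sig ra rb p = x} = {}"
    proof (rule ccontr)
      assume "{p. sig ra rb p = x} \<noteq> {}"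
      then obtain p where "sig ra rb p = x" by blast
      then have "fst x j = ra j + fst p j" "snd x j = rb j + snd p j" unfolding sig_eq by auto
      then show False using j by simp
    qed
    then have pv: "push (sig ra rb) (Efun n) x = (0::'k)" using push_preimage[of "sig ra rb" x "{}"] by simp
    have jn: "j < n" using j unfolding ra_def rb_def rs_def by (cases "j < n") auto
    have "Gf n a b x = (0::'k)"
    proof (cases "x \<in> monset n")
      case True
      have jv: "ra j = a j" "rb j = b j" using jn unfolding ra_def rb_def rs_def by auto
      have "(\<Prod>j<n. ((if fst x j = a j \<and> snd x j = b j then 1 else 0)
          - (if fst x j = Suc (a j) \<and> snd x j = Suc (b j) then 1 else (0::'k)))) = 0"
      proof (rule prod_zero)
        show "finite {..<n}" by simp
        have "\<not> (fst x j = a j \<and> snd x j = b j)" "\<not> (fst x j = Suc (a j) \<and> snd x j = Suc (b j))"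
          using j jv by auto
        then show "\<exists>j\<in>{..<n}. ((if fst x j = a j \<and> snd x j = b j then 1 else 0)
          - (if fst x j = Suc (a j) \<and> snd x j = Suc (b j) then 1 else (0::'k))) = 0"
          using jn by (intro bexI[of _ j]) simp_all
      qed
      note pz = this
      show ?thesis unfolding Gf_formula if_P[OF True] by (rule pz)
    qed (simp add: Gf_formula)
    then show ?thesis using pv by simp
  qed
qed

lemma Gf_in_ideal:
  assumes I: "is_ideal n I" and e: "Efun n \<in> I"
  shows "(Gf n a b :: monom \<Rightarrow> 'k::field) \<in> I"
proof -
  have e1: "emon (fst (rs n a b), (\<lambda>_. 0)) \<in> (Sn n :: (monom \<Rightarrow> 'k) set)"
    by (rule emon_Sn) (auto simp: monset_iff rs_def)
  have e2: "emon ((\<lambda>_. 0), snd (rs n a b)) \<in> (Sn n :: (monom \<Rightarrow> 'k) set)"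
    by (rule emon_Sn) (auto simp: monset_iff rs_def)
  have "Smult (Smult (emon (fst (rs n a b), (\<lambda>_. 0))) (Efun n)) (emon ((\<lambda>_. 0), snd (rs n a b))) \<in> I"
    by (rule idealD(6)[OF I idealD(5)[OF I e e1] e2])
  then show ?thesis unfolding sig_push[OF SnD(1)[OF Efun_Sn]] Gf_shift .
qed

lemma Ftens_sub_ideal:
  assumes I: "is_ideal n I" and e: "Efun n \<in> I"
  shows "Ftens n \<subseteq> (I :: (monom \<Rightarrow> 'k::field) set)"
  unfolding Ftens_def
  by (rule span_sub_ideal[OF I]) (use Gf_in_ideal[OF I e] in \<open>auto simp: Gf_def\<close>)


lemma push_fin':
  assumes "finite A" "{x. f x \<noteq> 0 \<and> \<tau> x = y} \<subseteq> A"
  shows "push \<tau> f y = (\<Sum>x\<in>A. if \<tau> x = y then f x else 0)"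
proof -
  have "(\<Sum>x\<in>A. if \<tau> x = y then f x else 0) = (\<Sum>x\<in>{x\<in>A. \<tau> x = y}. f x)"
    using assms(1) by (simp add: sum.inter_filter)
  also have "\<dots> = (\<Sum>x\<in>{x. f x \<noteq> 0 \<and> \<tau> x = y}. f x)"
    by (rule sum.mono_neutral_right) (use assms in auto)
  finally show ?thesis unfolding push_def by simp
qed

lemma Gf_split:
  assumes i: "i < n" and x: "x \<in> monset n"
  shows "(Gf n a b x :: 'k::field) = ((if fst x i = a i \<and> snd x i = b i then 1 else 0)
      - (if fst x i = Suc (a i) \<and> snd x i = Suc (b i) then 1 else 0)) *
    (\<Prod>j\<in>{..<n}-{i}. ((if fst x j = a j \<and> snd x j = b j then 1 else 0)
      - (if fst x j = Suc (a j) \<and> snd x j = Suc (b j) then 1 else 0)))"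
  unfolding Gf_formula if_P[OF x] by (rule prod.remove) (use i in auto)

lemma Gf_Kid:
  assumes i: "i < n"
  shows "(Gf n a b :: monom \<Rightarrow> 'k::field) \<in> Kid n i"
proof -
  have "push (phi i) (Gf n a b :: monom \<Rightarrow> 'k) z = 0" for z
  proof -
    obtain w d where z: "z = (w, d)" by (cases z)
    define x1 where "x1 = ((fst w)(i := a i), (snd w)(i := b i))"
    define x2 where "x2 = ((fst w)(i := Suc (a i)), (snd w)(i := Suc (b i)))"
    have sub: "{x. (Gf n a b x :: 'k) \<noteq> 0 \<and> phi i x = z} \<subseteq> {x1, x2}"
    proof
      fix x assume "x \<in> {x. (Gf n a b x :: 'k) \<noteq> 0 \<and> phi i x = z}"
      then have g: "(Gf n a b x :: 'k) \<noteq> 0" and p: "phi i x = (w,d)" using z by auto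
      have xm: "x \<in> monset n" using g Gf_formula[of n a b x] by (auto split: if_splits)
      have fac: "((if fst x i = a i \<and> snd x i = b i then 1 else 0)
          - (if fst x i = Suc (a i) \<and> snd x i = Suc (b i) then 1 else (0::'k))) \<noteq> 0"
        using g unfolding Gf_split[OF i xm] by auto
      have o: "(fst x)(i := 0) = fst w" "(snd x)(i := 0) = snd w" using p unfolding phi_def by auto
      have ow: "fst w i = 0" "snd w i = 0" using o by (metis fun_upd_same)+
      have "(fst x i = a i \<and> snd x i = b i) \<or> (fst x i = Suc (a i) \<and> snd x i = Suc (b i))"
        using fac by (auto split: if_splits)
      then show "x \<in> {x1, x2}"
      proof
        assume h: "fst x i = a i \<and> snd x i = b i"
        have "fst x = fst x1" unfolding x1_def using o h by (auto simp: fun_eq_iff) (metis fun_upd_other)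
        moreover have "snd x = snd x1" unfolding x1_def using o h by (auto simp: fun_eq_iff) (metis fun_upd_other)
        ultimately show ?thesis using pair_eqI by blast
      next
        assume h: "fst x i = Suc (a i) \<and> snd x i = Suc (b i)"
        have "fst x = fst x2" unfolding x2_def using o h by (auto simp: fun_eq_iff) (metis fun_upd_other)
        moreover have "snd x = snd x2" unfolding x2_def using o h by (auto simp: fun_eq_iff) (metis fun_upd_other)
        ultimately show ?thesis using pair_eqI by blast
      qed
    qed
    have ne: "x1 \<noteq> x2" unfolding x1_def x2_def by (auto simp: fun_eq_iff)
    have ph: "phi i x1 = phi i x2" unfolding phi_def x1_def x2_def by auto
    have "push (phi i) (Gf n a b :: monom \<Rightarrow> 'k) z = (\<Sum>x\<in>{x1,x2}. if phi i x = z then Gf n a b x else 0)"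
      by (rule push_fin'[OF _ sub]) simp
    also have "\<dots> = (if phi i x1 = z then Gf n a b x1 + Gf n a b x2 else 0)"
      using ne ph by simp
    also have "Gf n a b x1 + Gf n a b x2 = (0::'k)"
    proof (cases "x1 \<in> monset n")
      case True
      have m2: "x2 \<in> monset n" using True i unfolding x1_def x2_def monset_iff by auto
      have pr: "(\<Prod>j\<in>{..<n}-{i}. ((if fst x1 j = a j \<and> snd x1 j = b j then 1 else 0)
          - (if fst x1 j = Suc (a j) \<and> snd x1 j = Suc (b j) then 1 else (0::'k))))
        = (\<Prod>j\<in>{..<n}-{i}. ((if fst x2 j = a j \<and> snd x2 j = b j then 1 else 0)
          - (if fst x2 j = Suc (a j) \<and> snd x2 j = Suc (b j) then 1 else 0)))"
        by (rule prod.cong) (auto simp: x1_def x2_def)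
      show ?thesis unfolding Gf_split[OF i True] Gf_split[OF i m2] pr by (simp add: x1_def x2_def)
    next
      case False
      have m2: "x2 \<notin> monset n" using False i unfolding x1_def x2_def monset_iff by auto
      show ?thesis using False m2 by (simp add: Gf_formula)
    qed
    finally show ?thesis by simp
  qed
  then show ?thesis unfolding Kid_def using Gf_Sn by blast
qed

lemma max_lvl_pos':
  assumes f: "f \<in> Kid n i" and m: "f m \<noteq> 0" and mx: "\<forall>x. f x \<noteq> 0 \<longrightarrow> phi i x = phi i m \<longrightarrow> lvl i x \<le> lvl i m"
  shows "lvl i m > 0"
proof (rule ccontr)
  assume "\<not> lvl i m > 0"
  then have l0: "lvl i m = 0" by simp
  have "\<forall>x. f x \<noteq> 0 \<longrightarrow> phi i x = phi i m \<longrightarrow> x = m"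
    using mx l0 phi_lvl_inj by (metis le_zero_eq)
  then have "push (phi i) f (phi i m) = f m" using push_single by (metis (no_types, lifting))
  with KidD(2)[OF f] m show False by simp
qed

definition tlvl :: "nat \<Rightarrow> monom \<Rightarrow> nat" where
  "tlvl n x = (\<Sum>j<n. lvl j x)"

lemma tlvl_split: "i < n \<Longrightarrow> tlvl n x = lvl i x + (\<Sum>j\<in>{..<n}-{i}. lvl j x)"
  unfolding tlvl_def by (rule sum.remove) auto

lemma Gf_val:
  assumes x: "x \<in> monset n"
  shows "(Gf n a b x :: 'k::field) \<noteq> 0 \<longleftrightarrow> (\<forall>j<n. (fst x j = a j \<and> snd x j = b j) \<or> (fst x j = Suc (a j) \<and> snd x j = Suc (b j)))"
proof -
  have "(Gf n a b x :: 'k) \<noteq> 0 \<longleftrightarrow> (\<forall>j\<in>{..<n}. ((if fst x j = a j \<and> snd x j = b j then 1 else 0)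
      - (if fst x j = Suc (a j) \<and> snd x j = Suc (b j) then 1 else (0::'k))) \<noteq> 0)"
    unfolding Gf_formula if_P[OF x] by (simp add: prod_zero_iff)
  also have "\<dots> \<longleftrightarrow> (\<forall>j<n. (fst x j = a j \<and> snd x j = b j) \<or> (fst x j = Suc (a j) \<and> snd x j = Suc (b j)))"
    by auto
  finally show ?thesis .
qed

lemma Kint_sub_Ftens:
  "{f \<in> Sn n. \<forall>i<n. f \<in> Kid n i} \<subseteq> (Ftens n :: (monom \<Rightarrow> 'k::field) set)"
proof (rule descent[where L = "tlvl n"])
  show "\<And>f. f \<in> {f \<in> Sn n. \<forall>i<n. f \<in> (Kid n i :: (monom \<Rightarrow> 'k) set)} \<Longrightarrow> finite {x. f x \<noteq> 0}"
    using SnD(1) by blast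
  show "\<And>f g c. f \<in> {f \<in> Sn n. \<forall>i<n. f \<in> (Kid n i :: (monom \<Rightarrow> 'k) set)} \<Longrightarrow> g \<in> {f \<in> Sn n. \<forall>i<n. f \<in> Kid n i} \<Longrightarrow>
      (\<lambda>x. f x - c * g x) \<in> {f \<in> Sn n. \<forall>i<n. f \<in> Kid n i}"
  proof -
    fix f g :: "monom \<Rightarrow> 'k" and c
    assume f: "f \<in> {f \<in> Sn n. \<forall>i<n. f \<in> Kid n i}" and g: "g \<in> {f \<in> Sn n. \<forall>i<n. f \<in> Kid n i}"
    have "(\<lambda>x. 1 * f x + (-c) * g x) \<in> Sn n" by (rule Sn_lin) (use f g in auto)
    moreover have "\<forall>i<n. (\<lambda>x. f x - c * g x) \<in> Kid n i" using f g Kid_diff by blast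
    ultimately show "(\<lambda>x. f x - c * g x) \<in> {f \<in> Sn n. \<forall>i<n. f \<in> Kid n i}" by simp
  qed
  show "(\<lambda>_. 0) \<in> (Ftens n :: (monom \<Rightarrow> 'k) set)" unfolding Ftens_def by (rule span_zero)
  show "\<And>f g c. f \<in> (Ftens n :: (monom \<Rightarrow> 'k) set) \<Longrightarrow> g \<in> Ftens n \<Longrightarrow> (\<lambda>x. f x + c * g x) \<in> Ftens n"
    unfolding Ftens_def by (rule span_lin)
  fix f :: "monom \<Rightarrow> 'k" and m
  assume fK: "f \<in> {f \<in> Sn n. \<forall>i<n. f \<in> Kid n i}" and m: "f m \<noteq> 0" and mx: "\<forall>x. f x \<noteq> 0 \<longrightarrow> tlvl n x \<le> tlvl n m"
  have fS: "f \<in> Sn n" and fKi: "\<And>i. i < n \<Longrightarrow> f \<in> Kid n i" using fK by auto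
  have mm: "m \<in> monset n" using SnD(2)[OF fS m] .
  have pos: "lvl i m > 0" if i: "i < n" for i
  proof (rule max_lvl_pos'[OF fKi[OF i] m], intro allI impI)
    fix x assume fx: "f x \<noteq> 0" and ph: "phi i x = phi i m"
    have "(\<Sum>j\<in>{..<n}-{i}. lvl j x) = (\<Sum>j\<in>{..<n}-{i}. lvl j m)"
    proof (rule sum.cong[OF refl])
      fix j assume "j \<in> {..<n}-{i}"
      then have ji: "j \<noteq> i" by simp
      have "((fst x)(i:=0)) j = ((fst m)(i:=0)) j" "((snd x)(i:=0)) j = ((snd m)(i:=0)) j"
        using ph unfolding phi_def by auto
      then show "lvl j x = lvl j m" using ji unfolding lvl_def by simp
    qed
    then show "lvl i x \<le> lvl i m" using mx fx tlvl_split[OF i, of x] tlvl_split[OF i, of m] by auto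
  qed
  define a where "a = (\<lambda>j. fst m j - 1)"
  define b where "b = (\<lambda>j. snd m j - 1)"
  have mj: "fst m j = Suc (a j) \<and> snd m j = Suc (b j)" if "j < n" for j
    using pos[OF that] unfolding a_def b_def lvl_def by auto
  let ?g = "Gf n a b :: monom \<Rightarrow> 'k"
  have h1: "?g \<in> {f \<in> Sn n. \<forall>i<n. f \<in> Kid n i}" using Gf_Sn Gf_Kid by blast
  have h2: "?g \<in> Ftens n" unfolding Ftens_def Gf_def by (rule span_gen) blast
  have h3: "?g m \<noteq> 0" unfolding Gf_val[OF mm] using mj by blast
  have h4: "\<forall>x. ?g x \<noteq> 0 \<longrightarrow> x \<noteq> m \<longrightarrow> tlvl n x < tlvl n m"
  proof (intro allI impI)
    fix x assume gx: "?g x \<noteq> 0" and xm: "x \<noteq> m"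
    have xmon: "x \<in> monset n" using gx Gf_formula[of n a b x] by (auto split: if_splits)
    have cj: "\<forall>j<n. (fst x j = a j \<and> snd x j = b j) \<or> (fst x j = Suc (a j) \<and> snd x j = Suc (b j))"
      using gx Gf_val[OF xmon] by blast
    obtain j where j: "j < n" "\<not> (fst x j = fst m j \<and> snd x j = snd m j)"
      using xm monset_eq_iff[OF xmon mm] by blast
    have le: "\<forall>j\<in>{..<n}. lvl j x \<le> lvl j m"
    proof
      fix j assume "j \<in> {..<n}"
      then have "j < n" by simp
      then show "lvl j x \<le> lvl j m" using cj mj[of j] unfolding lvl_def by auto
    qed
    have lt: "lvl j x < lvl j m" using cj j mj[of j] unfolding lvl_def by auto
    show "tlvl n x < tlvl n m" unfolding tlvl_def
      by (rule sum_strict_mono_ex1) (use le lt j in auto)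
  qed
  show "\<exists>g :: monom \<Rightarrow> 'k. g \<in> {f \<in> Sn n. \<forall>i<n. f \<in> Kid n i} \<and> g \<in> Ftens n \<and> g m \<noteq> 0 \<and> (\<forall>x. g x \<noteq> 0 \<longrightarrow> x \<noteq> m \<longrightarrow> tlvl n x < tlvl n m)"
    using h1 h2 h3 h4 by blast
qed


lemma push_cong_fiber:
  assumes "\<forall>x. \<tau> x = y \<longrightarrow> f x = g x"
  shows "push \<tau> f y = push \<tau> g y"
proof -
  have "{x. f x \<noteq> 0 \<and> \<tau> x = y} = {x. g x \<noteq> 0 \<and> \<tau> x = y}" using assms by auto
  then show ?thesis unfolding push_def using assms by (auto intro!: sum.cong)
qed

lemma push_zero_fiber:
  assumes "\<forall>x. f x \<noteq> 0 \<longrightarrow> \<tau> x \<noteq> y"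
  shows "push \<tau> f y = 0"
proof -
  have e: "{x. f x \<noteq> 0 \<and> \<tau> x = y} = {}" using assms by auto
  show ?thesis unfolding push_def e by simp
qed

lemma tau_eq: "tau a b p = ((\<lambda>j. (fst p j - a j) + (b j - (snd p j + (a j - fst p j)))), (\<lambda>j. (snd p j + (a j - fst p j)) - b j))"
  unfolding tau_def mmul_def by auto

definition kap :: "(nat \<Rightarrow> nat) \<Rightarrow> (nat \<Rightarrow> nat) \<Rightarrow> monom \<times> int \<Rightarrow> monom \<times> int" where
  "kap a b u = (tau a b (fst u), snd u)"

lemma phi_tau:
  assumes "a i = 0" "b i = 0"
  shows "phi i \<circ> tau a b = kap a b \<circ> phi i"
  using assms unfolding phi_def kap_def tau_eq by (auto simp: fun_eq_iff)

lemma mmul_zm_iff: "mmul p q = zm \<longleftrightarrow> fst p = (\<lambda>_. 0) \<and> snd q = (\<lambda>_. 0) \<and> snd p = fst q"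
proof -
  have "mmul p q = zm \<longleftrightarrow> (\<forall>j. fst p j + (fst q j - snd p j) = 0 \<and> snd q j + (snd p j - fst q j) = 0)"
    unfolding mmul_def by (auto simp: fun_eq_iff)
  also have "\<dots> \<longleftrightarrow> (\<forall>j. fst p j = 0 \<and> snd q j = 0 \<and> snd p j = fst q j)" by (intro all_cong1) arith
  also have "\<dots> \<longleftrightarrow> fst p = (\<lambda>_. 0) \<and> snd q = (\<lambda>_. 0) \<and> snd p = fst q" by (auto simp: fun_eq_iff)
  finally show ?thesis .
qed

lemma phi_fst_monset: "x \<in> monset n \<Longrightarrow> fst (phi i x) \<in> monset n"
  unfolding phi_def monset_iff by auto

lemma extract_g1:
  assumes i: "i < n" and fS: "f \<in> Sn n" and nk: "f \<notin> Kid n i"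
  shows "\<exists>w0. w0 \<in> monset n \<and> fst w0 i = 0 \<and> snd w0 i = 0 \<and> (\<exists>d. push (phi i) f (w0, d) \<noteq> (0::'k::field)) \<and>
    (\<forall>d. push (phi i) (push (tau (fst w0) (snd w0)) f) (zm, d) = push (phi i) f (w0, d))"
proof -
  let ?P = "push (phi i) f"
  have finP: "finite {u. ?P u \<noteq> 0}" by (rule finite_supp_push[OF SnD(1)[OF fS]])
  obtain z0 where z0: "?P z0 \<noteq> 0" using nk fS unfolding Kid_def by auto
  let ?W = "fst ` {u. ?P u \<noteq> 0}" let ?s = "\<lambda>w. \<Sum>j<n. fst w j"
  have finW: "finite ?W" using finP by simp
  have neW: "?W \<noteq> {}" using z0 by auto
  have "Min (?s ` ?W) \<in> ?s ` ?W" using finW neW by simp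
  then obtain w0 where w0W: "w0 \<in> ?W" and w0m': "Min (?s ` ?W) = ?s w0" by (rule imageE)
  note w0m = w0m'[symmetric]
  have mn: "\<forall>w\<in>?W. ?s w0 \<le> ?s w" using w0m finW by simp
  have Wprop: "w \<in> monset n \<and> fst w i = 0 \<and> snd w i = 0" if wW: "w \<in> ?W" for w
  proof -
    obtain u where u: "?P u \<noteq> 0" "w = fst u" using wW by blast
    obtain x where x: "f x \<noteq> 0" "u = phi i x" using supp_push[of "phi i" f] u(1) by blast
    have "x \<in> monset n" using SnD(2)[OF fS x(1)] .
    then show ?thesis using u x phi_fst_monset[of x n i] unfolding phi_def by auto
  qed
  have w0p: "w0 \<in> monset n" "fst w0 i = 0" "snd w0 i = 0" using Wprop[OF w0W] by auto
  obtain d0 where d0: "?P (w0, d0) \<noteq> 0" using w0W by auto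
  have main: "push (phi i) (push (tau (fst w0) (snd w0)) f) (zm, d) = ?P (w0, d)" for d
  proof -
    have "push (phi i) (push (tau (fst w0) (snd w0)) f) = push (phi i \<circ> tau (fst w0) (snd w0)) f"
      by (rule push_comp[OF SnD(1)[OF fS]])
    also have "\<dots> = push (kap (fst w0) (snd w0) \<circ> phi i) f" using phi_tau[of "fst w0" i "snd w0", OF w0p(2,3)] by simp
    also have "\<dots> = push (kap (fst w0) (snd w0)) ?P" by (rule push_comp[OF SnD(1)[OF fS], symmetric])
    finally have e: "push (phi i) (push (tau (fst w0) (snd w0)) f) = push (kap (fst w0) (snd w0)) ?P" .
    have uniq: "\<forall>u. ?P u \<noteq> 0 \<longrightarrow> kap (fst w0) (snd w0) u = (zm, d) \<longrightarrow> u = (w0, d)"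
    proof (intro allI impI)
      fix u assume pu: "?P u \<noteq> 0" and k: "kap (fst w0) (snd w0) u = (zm, d)"
      have uW: "fst u \<in> ?W" using pu by auto
      have t: "tau (fst w0) (snd w0) (fst u) = zm" and du: "snd u = d" using k unfolding kap_def by auto
      have c: "\<forall>j. fst (fst u) j \<le> fst w0 j \<and> snd (fst u) j + fst w0 j = snd w0 j + fst (fst u) j"
        using t tau_zero by blast
      have e1: "fst (fst u) = fst w0"
        by (rule sumfst_monset_eq[OF conjunct1[OF Wprop[OF uW]] w0p(1)]) (use c mn uW in auto)
      have e2: "snd (fst u) = snd w0"
      proof fix j show "snd (fst u) j = snd w0 j" using c e1 by (metis add_right_cancel) qed
      have "fst u = w0" using e1 e2 by (rule pair_eqI)
      then show "u = (w0, d)" using du by (cases u) auto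
    qed
    have "kap (fst w0) (snd w0) (w0, d) = (zm, d)" unfolding kap_def using tau_zero by simp
    then show ?thesis unfolding e using push_single[OF uniq] by simp
  qed
  show ?thesis using w0p d0 main by blast
qed


lemma g1_facts:
  assumes i: "i < n" and I: "is_ideal n I" and f: "f \<in> I" and nk: "f \<notin> Kid n i"
  shows "\<exists>g1. g1 \<in> I \<and> (\<exists>d. push (phi i) g1 (zm, d) \<noteq> (0::'k::field))"
proof -
  have fS: "f \<in> Sn n" using idealD(1)[OF I] f by blast
  obtain w0 where w0: "w0 \<in> monset n" "fst w0 i = 0" "snd w0 i = 0" and d: "\<exists>d. push (phi i) f (w0, d) \<noteq> (0::'k)"
    and m: "\<forall>d. push (phi i) (push (tau (fst w0) (snd w0)) f) (zm, d) = push (phi i) f (w0, d)"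
    using extract_g1[OF i fS nk] by blast
  have e1: "emon ((\<lambda>_. 0), fst w0) \<in> (Sn n :: (monom \<Rightarrow> 'k) set)"
    by (rule emon_Sn) (use w0 in \<open>auto simp: monset_iff\<close>)
  have e2: "emon (snd w0, (\<lambda>_. 0)) \<in> (Sn n :: (monom \<Rightarrow> 'k) set)"
    by (rule emon_Sn) (use w0 in \<open>auto simp: monset_iff\<close>)
  have "Smult (Smult (emon ((\<lambda>_. 0), fst w0)) f) (emon (snd w0, (\<lambda>_. 0))) \<in> I"
    by (rule idealD(6)[OF I idealD(5)[OF I f e1] e2])
  then have "push (tau (fst w0) (snd w0)) f \<in> I" unfolding tau_push[OF SnD(1)[OF fS]] .
  then show ?thesis using d m by metis
qed

lemma extract_right:
  assumes i: "i < n" and I: "is_ideal n I" and f: "f \<in> I" and nk: "f \<notin> Kid n i"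
  shows "\<exists>h\<in>I. (\<exists>d. push (phi i) h (zm, d) \<noteq> (0::'k::field)) \<and>
     (\<forall>w d. fst w = (\<lambda>_. 0) \<longrightarrow> snd w \<noteq> (\<lambda>_. 0) \<longrightarrow> push (phi i) h (w, d) = 0)"
proof -
  obtain g1 :: "monom \<Rightarrow> 'k" where g1: "g1 \<in> I" and d: "\<exists>d. push (phi i) g1 (zm, d) \<noteq> 0"
    using g1_facts[OF i I f nk] by blast
  have g1S: "g1 \<in> Sn n" using idealD(1)[OF I] g1 by blast
  define C where "C = filter (\<lambda>j. j \<noteq> i) [0..<n]"
  have C: "set C \<subseteq> {..<n}" "\<And>j. j \<in> set C \<longleftrightarrow> j < n \<and> j \<noteq> i" unfolding C_def by auto
  define h where "h = rw C g1"
  have hI: "h \<in> I" unfolding h_def by (rule rw_ideal[OF I g1 C(1)])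
  have hS: "h \<in> Sn n" using idealD(1)[OF I] hI by blast
  have a: "push (phi i) h (zm, d) = push (phi i) g1 (zm, d)" for d
  proof (rule push_cong_fiber, intro allI impI)
    fix x assume "phi i x = (zm, d)"
    then have "(fst x)(i := 0) = (\<lambda>_. 0)" "(snd x)(i := 0) = (\<lambda>_. 0)" unfolding phi_def by auto
    then have "\<forall>j\<in>set C. fst x j = 0 \<and> snd x j = 0" using C(2) by (metis fun_upd_other)
    then show "h x = g1 x" unfolding h_def by (rule rw_R1[OF SnD(1)[OF g1S]])
  qed
  have b: "push (phi i) h (w, d) = 0" if w: "fst w = (\<lambda>_. 0)" "snd w \<noteq> (\<lambda>_. 0)" for w d
  proof (rule push_zero_fiber, intro allI impI notI)
    fix x assume hx: "h x \<noteq> 0" and px: "phi i x = (w, d)"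
    obtain j where j: "snd w j \<noteq> 0" using w(2) by auto
    have o: "(fst x)(i := 0) = fst w" "(snd x)(i := 0) = snd w" using px unfolding phi_def by auto
    have ji: "j \<noteq> i" using o(2) j by (metis fun_upd_same)
    have sj: "snd x j \<noteq> 0" using o(2) j ji by (metis fun_upd_other)
    have fj: "fst x j = 0" using o(1) w(1) ji by (metis fun_upd_other)
    have xm: "x \<in> monset n" using SnD(2)[OF hS hx] .
    have jn: "j < n" using xm sj unfolding monset_iff by (meson not_le)
    have "h x = 0" unfolding h_def by (rule rw_R2[OF SnD(1)[OF g1S]]) (use C(2) ji jn fj sj in blast)
    then show False using hx by simp
  qed
  show ?thesis using hI a b d by metis
qed

lemma extract_left:
  assumes i: "i < n" and I: "is_ideal n I" and f: "f \<in> I" and nk: "f \<notin> Kid n i"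
  shows "\<exists>h\<in>I. (\<exists>d. push (phi i) h (zm, d) \<noteq> (0::'k::field)) \<and>
     (\<forall>w d. snd w = (\<lambda>_. 0) \<longrightarrow> fst w \<noteq> (\<lambda>_. 0) \<longrightarrow> push (phi i) h (w, d) = 0)"
proof -
  obtain g1 :: "monom \<Rightarrow> 'k" where g1: "g1 \<in> I" and d: "\<exists>d. push (phi i) g1 (zm, d) \<noteq> 0"
    using g1_facts[OF i I f nk] by blast
  have g1S: "g1 \<in> Sn n" using idealD(1)[OF I] g1 by blast
  define C where "C = filter (\<lambda>j. j \<noteq> i) [0..<n]"
  have C: "set C \<subseteq> {..<n}" "\<And>j. j \<in> set C \<longleftrightarrow> j < n \<and> j \<noteq> i" unfolding C_def by auto
  define h where "h = lw C g1"
  have hI: "h \<in> I" unfolding h_def by (rule lw_ideal[OF I g1 C(1)])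
  have hS: "h \<in> Sn n" using idealD(1)[OF I] hI by blast
  have a: "push (phi i) h (zm, d) = push (phi i) g1 (zm, d)" for d
  proof (rule push_cong_fiber, intro allI impI)
    fix x assume "phi i x = (zm, d)"
    then have "(fst x)(i := 0) = (\<lambda>_. 0)" "(snd x)(i := 0) = (\<lambda>_. 0)" unfolding phi_def by auto
    then have "\<forall>j\<in>set C. fst x j = 0 \<and> snd x j = 0" using C(2) by (metis fun_upd_other)
    then show "h x = g1 x" unfolding h_def by (rule lw_L1[OF SnD(1)[OF g1S]])
  qed
  have b: "push (phi i) h (w, d) = 0" if w: "snd w = (\<lambda>_. 0)" "fst w \<noteq> (\<lambda>_. 0)" for w d
  proof (rule push_zero_fiber, intro allI impI notI)
    fix x assume hx: "h x \<noteq> 0" and px: "phi i x = (w, d)"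
    obtain j where j: "fst w j \<noteq> 0" using w(2) by auto
    have o: "(fst x)(i := 0) = fst w" "(snd x)(i := 0) = snd w" using px unfolding phi_def by auto
    have ji: "j \<noteq> i" using o(1) j by (metis fun_upd_same)
    have sj: "fst x j \<noteq> 0" using o(1) j ji by (metis fun_upd_other)
    have fj: "snd x j = 0" using o(2) w(1) ji by (metis fun_upd_other)
    have xm: "x \<in> monset n" using SnD(2)[OF hS hx] .
    have jn: "j < n" using xm sj unfolding monset_iff by (meson not_le)
    have "h x = 0" unfolding h_def by (rule lw_L2[OF SnD(1)[OF g1S]]) (use C(2) ji jn fj sj in blast)
    then show False using hx by simp
  qed
  show ?thesis using hI a b d by metis
qed


lemma Sone_notin_Kid: "(Sone :: monom \<Rightarrow> 'k::field) \<notin> Kid n i"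
proof
  assume "(Sone :: monom \<Rightarrow> 'k) \<in> Kid n i"
  then have "push (phi i) (Sone :: monom \<Rightarrow> 'k) (phi i zm) = 0" by (rule KidD(2))
  then show False unfolding Sone_emon push_emon by simp
qed

lemma Kid_prime:
  assumes i: "i < n"
  shows "is_prime n (Kid n i :: (monom \<Rightarrow> 'k::field) set)"
  unfolding is_prime_def
proof (intro conjI allI impI)
  show "is_ideal n (Kid n i :: (monom \<Rightarrow> 'k) set)" by (rule Kid_ideal)
  show "(Kid n i :: (monom \<Rightarrow> 'k) set) \<noteq> Sn n" using Sone_Sn Sone_notin_Kid by blast
  fix I J :: "(monom \<Rightarrow> 'k) set"
  assume H: "is_ideal n I \<and> is_ideal n J \<and> iprod n I J \<subseteq> Kid n i"
  then have I: "is_ideal n I" and J: "is_ideal n J" and sub: "iprod n I J \<subseteq> Kid n i" by auto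
  show "I \<subseteq> Kid n i \<or> J \<subseteq> Kid n i"
  proof (rule ccontr)
    assume "\<not> (I \<subseteq> Kid n i \<or> J \<subseteq> Kid n i)"
    then obtain f g where f: "f \<in> I" "f \<notin> Kid n i" and g: "g \<in> J" "g \<notin> Kid n i" by blast
    obtain h1 where h1: "h1 \<in> I" "\<exists>d. push (phi i) h1 (zm, d) \<noteq> 0"
      and h1b: "\<forall>w d. fst w = (\<lambda>_. 0) \<longrightarrow> snd w \<noteq> (\<lambda>_. 0) \<longrightarrow> push (phi i) h1 (w, d) = 0"
      using extract_right[OF i I f] by blast
    obtain h2 where h2: "h2 \<in> J" "\<exists>d. push (phi i) h2 (zm, d) \<noteq> 0"
      and h2b: "\<forall>w d. snd w = (\<lambda>_. 0) \<longrightarrow> fst w \<noteq> (\<lambda>_. 0) \<longrightarrow> push (phi i) h2 (w, d) = 0"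
      using extract_left[OF i J g] by blast
    have h1S: "h1 \<in> Sn n" using idealD(1)[OF I] h1(1) by blast
    have h2S: "h2 \<in> Sn n" using idealD(1)[OF J] h2(1) by blast
    let ?P1 = "push (phi i) h1" let ?P2 = "push (phi i) h2"
    let ?S1 = "{d. ?P1 (zm, d) \<noteq> 0}" let ?S2 = "{d. ?P2 (zm, d) \<noteq> 0}"
    have "?S1 \<subseteq> snd ` {u. ?P1 u \<noteq> 0}"
    proof
      fix d assume "d \<in> ?S1"
      then show "d \<in> snd ` {u. ?P1 u \<noteq> 0}" by (intro image_eqI[of _ _ "(zm, d)"]) auto
    qed
    then have fS1: "finite ?S1" by (rule finite_subset) (rule finite_imageI[OF finite_supp_push[OF SnD(1)[OF h1S]]])
    have "?S2 \<subseteq> snd ` {u. ?P2 u \<noteq> 0}"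
    proof
      fix d assume "d \<in> ?S2"
      then show "d \<in> snd ` {u. ?P2 u \<noteq> 0}" by (intro image_eqI[of _ _ "(zm, d)"]) auto
    qed
    then have fS2: "finite ?S2" by (rule finite_subset) (rule finite_imageI[OF finite_supp_push[OF SnD(1)[OF h2S]]])
    define D1 where "D1 = Max ?S1"
    define D2 where "D2 = Max ?S2"
    have D1: "?P1 (zm, D1) \<noteq> 0" "\<And>d. ?P1 (zm, d) \<noteq> 0 \<Longrightarrow> d \<le> D1"
      unfolding D1_def using Max_in[OF fS1] Max_ge[OF fS1] h1(2) by auto
    have D2: "?P2 (zm, D2) \<noteq> 0" "\<And>d. ?P2 (zm, d) \<noteq> 0 \<Longrightarrow> d \<le> D2"
      unfolding D2_def using Max_in[OF fS2] Max_ge[OF fS2] h2(2) by auto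
    have "Smult h1 h2 \<in> Kid n i" using sub iprod_mem[OF h1(1) h2(1)] by blast
    then have z: "push (phi i) (Smult h1 h2) (zm, D1 + D2) = 0" by (rule KidD(2))
    let ?F = "\<lambda>(u,v). ?P1 u * ?P2 v"
    have uniq: "\<forall>uv. ?F uv \<noteq> 0 \<longrightarrow> case_prod psi uv = (zm, D1 + D2) \<longrightarrow> uv = ((zm, D1), (zm, D2))"
    proof (intro allI impI)
      fix uv assume F: "?F uv \<noteq> 0" and ps: "case_prod psi uv = (zm, D1 + D2)"
      obtain u v where uv: "uv = (u, v)" by (cases uv)
      have p1: "?P1 u \<noteq> 0" and p2: "?P2 v \<noteq> 0" using F uv by auto
      have mz: "mmul (fst u) (fst v) = zm" and ds: "snd u + snd v = D1 + D2" using ps uv unfolding psi_def by auto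
      then have c: "fst (fst u) = (\<lambda>_. 0)" "snd (fst v) = (\<lambda>_. 0)" "snd (fst u) = fst (fst v)"
        unfolding mmul_zm_iff by auto
      have "snd (fst u) = (\<lambda>_. 0)"
      proof (rule ccontr)
        assume "snd (fst u) \<noteq> (\<lambda>_. 0)"
        then have "?P1 (fst u, snd u) = 0" using h1b c(1) by blast
        then show False using p1 by simp
      qed
      then have fu: "fst u = zm" using c(1) by (intro pair_eqI) auto
      have fv: "fst v = zm" using c(2,3) \<open>snd (fst u) = (\<lambda>_. 0)\<close> by (intro pair_eqI) auto
      have "?P1 (zm, snd u) \<noteq> 0" using p1 fu by (metis prod.collapse)
      then have le1: "snd u \<le> D1" by (rule D1(2))
      have "?P2 (zm, snd v) \<noteq> 0" using p2 fv by (metis prod.collapse)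
      then have le2: "snd v \<le> D2" by (rule D2(2))
      have "snd u = D1" "snd v = D2" using le1 le2 ds by auto
      then show "uv = ((zm, D1), (zm, D2))" using uv fu fv by (metis prod.collapse)
    qed
    have "push (phi i) (Smult h1 h2) (zm, D1 + D2) = push (case_prod psi) ?F (zm, D1 + D2)"
      using push_Smult[OF SnD(1)[OF h1S] SnD(1)[OF h2S], of i] by simp
    also have "\<dots> = ?F ((zm, D1), (zm, D2))"
      using push_single[OF uniq] by (simp add: psi_def)
    also have "\<dots> \<noteq> 0" using D1(1) D2(1) by simp
    finally show False using z by simp
  qed
qed

lemma E_Kid_same: "i < n \<Longrightarrow> (E i :: monom \<Rightarrow> 'k::field) \<in> Kid n i"
proof -
  assume i: "i < n"
  have e: "E i = (\<lambda>x. emon zm x - emon (sing i 1 1) x :: 'k)" unfolding E_eq by simp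
  have "phi i zm = phi i (sing i 1 1)" unfolding phi_def sing_def by auto
  then show ?thesis unfolding e by (rule emon_diff_Kid[OF zm_monset sing_monset[OF i]])
qed

lemma E_notin_Kid: "i \<noteq> j \<Longrightarrow> (E i :: monom \<Rightarrow> 'k::field) \<notin> Kid n j"
proof
  assume ij: "i \<noteq> j" and E: "(E i :: monom \<Rightarrow> 'k) \<in> Kid n j"
  have e: "E i = (\<lambda>x. emon zm x - 1 * emon (sing i 1 1) x :: 'k)" unfolding E_eq by simp
  have ne: "phi j (sing i 1 1) \<noteq> phi j zm"
  proof
    assume "phi j (sing i 1 1) = phi j zm"
    then have "((fst (sing i 1 1))(j := 0)) i = ((fst zm)(j:=0)) i" unfolding phi_def by simp
    then show False using ij unfolding sing_def by simp
  qed
  have "push (phi j) (E i :: monom \<Rightarrow> 'k) (phi j zm) = 1"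
    unfolding e push_diff[OF emon_fin emon_fin] push_emon using ne by simp
  then show False using KidD(2)[OF E] by simp
qed

lemma Kid_incomp:
  assumes i: "i < n" and ji: "j \<noteq> i"
  shows "\<not> (Kid n i :: (monom \<Rightarrow> 'k::field) set) \<subseteq> Kid n j"
proof
  assume s: "(Kid n i :: (monom \<Rightarrow> 'k) set) \<subseteq> Kid n j"
  have "(E i :: monom \<Rightarrow> 'k) \<in> Kid n j" using s E_Kid_same[OF i] by (rule subsetD)
  moreover have "(E i :: monom \<Rightarrow> 'k) \<notin> Kid n j" using ji by (intro E_notin_Kid) simp
  ultimately show False by simp
qed

lemma Efun_prodlist: "Efun n = prodlist (map E [0..<n])"
  unfolding Efun_def Gf_def E_def by simp

lemma Efun_nz:
  assumes "(Efun n p :: 'k::field) \<noteq> 0"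
  shows "p \<in> monset n" "\<And>j. fst p j = 0 \<Longrightarrow> snd p j = 0" "\<And>j. snd p j = 0 \<Longrightarrow> fst p j = 0"
proof -
  show pm: "p \<in> monset n" using assms by (simp add: Efun_formula split: if_splits)
  have pr: "(\<Prod>j<n. ec (fst p j) (snd p j) :: 'k) \<noteq> 0" using assms pm by (simp add: Efun_formula)
  have "\<forall>j<n. (ec (fst p j) (snd p j) :: 'k) \<noteq> 0" using pr by (simp add: prod_zero_iff)
  then have cj: "\<forall>j<n. (fst p j = 0 \<and> snd p j = 0) \<or> (fst p j = 1 \<and> snd p j = 1)"
    unfolding ec_def by (metis (full_types))
  fix j
  show "fst p j = 0 \<Longrightarrow> snd p j = 0" using cj pm unfolding monset_iff by (metis not_le one_neq_zero)
  show "snd p j = 0 \<Longrightarrow> fst p j = 0" using cj pm unfolding monset_iff by (metis not_le one_neq_zero)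
qed

lemma Efun_zm: "(Efun n zm :: 'k::field) = 1"
  by (simp add: Efun_formula)

lemma EE_zm: "(Smult (Efun n) (Efun n) zm :: 'k::field) = 1"
proof -
  let ?F = "\<lambda>(p,q). (Efun n p :: 'k) * Efun n q"
  have uniq: "\<forall>pq. ?F pq \<noteq> 0 \<longrightarrow> case_prod mmul pq = zm \<longrightarrow> pq = (zm, zm)"
  proof (intro allI impI)
    fix pq assume F: "?F pq \<noteq> 0" and m: "case_prod mmul pq = zm"
    obtain p q where pq: "pq = (p, q)" by (cases pq)
    have ep: "(Efun n p :: 'k) \<noteq> 0" and eq: "(Efun n q :: 'k) \<noteq> 0" using F pq by auto
    have mpq: "mmul p q = zm" using m pq by simp
    have c: "fst p = (\<lambda>_. 0)" "snd q = (\<lambda>_. 0)" "snd p = fst q" using mpq[unfolded mmul_zm_iff] by auto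
    have sp: "snd p = (\<lambda>_. 0)" using Efun_nz(2)[OF ep] c(1) by (auto simp: fun_eq_iff)
    have "p = zm" using c(1) sp by (intro pair_eqI) auto
    moreover have "q = zm" using c(2,3) sp by (intro pair_eqI) auto
    ultimately show "pq = (zm, zm)" using pq by simp
  qed
  show ?thesis unfolding Smult_push using push_single[OF uniq] by (simp add: Efun_zm)
qed

lemma zero_prime: "is_prime n {(\<lambda>_. 0 :: 'k::field)}"
  unfolding is_prime_def
proof (intro conjI allI impI)
  show "is_ideal n {(\<lambda>_. 0 :: 'k)}" by (rule ideal_zero)
  have "Sone \<noteq> (\<lambda>_. 0 :: 'k)" unfolding Sone_def by (auto simp: fun_eq_iff)
  then show "{(\<lambda>_. 0 :: 'k)} \<noteq> Sn n" using Sone_Sn by blast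
  fix I J :: "(monom \<Rightarrow> 'k) set"
  assume H: "is_ideal n I \<and> is_ideal n J \<and> iprod n I J \<subseteq> {(\<lambda>_. 0)}"
  then have I: "is_ideal n I" and J: "is_ideal n J" and sub: "iprod n I J \<subseteq> {(\<lambda>_. 0)}" by auto
  show "I \<subseteq> {(\<lambda>_. 0)} \<or> J \<subseteq> {(\<lambda>_. 0)}"
  proof (rule ccontr)
    assume "\<not> (I \<subseteq> {(\<lambda>_. 0)} \<or> J \<subseteq> {(\<lambda>_. 0)})"
    then obtain f g where f: "f \<in> I" "f \<noteq> (\<lambda>_. 0)" and g: "g \<in> J" "g \<noteq> (\<lambda>_. 0)" by blast
    have "Efun n \<in> I" by (rule Efun_in_ideal[OF I f])
    moreover have "Efun n \<in> J" by (rule Efun_in_ideal[OF J g])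
    ultimately have "Smult (Efun n) (Efun n) \<in> {(\<lambda>_. 0 :: 'k)}" using sub iprod_mem by blast
    then have "Smult (Efun n) (Efun n) zm = (0::'k)" by simp
    then show False using EE_zm by (metis zero_neq_one)
  qed
qed


definition acc :: "nat \<Rightarrow> nat list \<Rightarrow> (monom \<Rightarrow> 'k::field) set" where
  "acc n xs = foldr (\<lambda>i acc. iprod n (pp n i) acc) xs (Sn n)"

lemma acc_Nil: "acc n [] = Sn n" unfolding acc_def by simp
lemma acc_Cons: "acc n (i # xs) = iprod n (pp n i) (acc n xs)" unfolding acc_def by simp

lemma pp_ideal: "i < n \<Longrightarrow> is_ideal n (pp n i :: (monom \<Rightarrow> 'k::field) set)"
  using pp_eq_Kid Kid_ideal by metis

lemma acc_ideal: "set xs \<subseteq> {..<n} \<Longrightarrow> is_ideal n (acc n xs :: (monom \<Rightarrow> 'k::field) set)"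
proof (induction xs)
  case Nil then show ?case by (simp add: acc_Nil ideal_Sn)
next
  case (Cons i xs)
  then have i: "i < n" and xs: "set xs \<subseteq> {..<n}" by auto
  show ?case unfolding acc_Cons
    by (rule iprod_ideal) (use idealD(1)[OF pp_ideal[OF i]] idealD(1)[OF Cons.IH[OF xs]] in auto)
qed

lemma acc_sub: "set xs \<subseteq> {..<n} \<Longrightarrow> i \<in> set xs \<Longrightarrow> acc n xs \<subseteq> (Kid n i :: (monom \<Rightarrow> 'k::field) set)"
proof (induction xs)
  case Nil then show ?case by simp
next
  case (Cons j xs)
  then have j: "j < n" and xs: "set xs \<subseteq> {..<n}" by auto
  have s: "acc n (j # xs) \<subseteq> pp n j \<inter> (acc n xs :: (monom \<Rightarrow> 'k) set)"
    unfolding acc_Cons by (rule iprod_sub[OF pp_ideal[OF j] acc_ideal[OF xs]])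
  show ?case
  proof (cases "i = j")
    case True then show ?thesis using s pp_eq_Kid[OF j] by auto
  next
    case False then have "i \<in> set xs" using Cons.prems by simp
    then show ?thesis using s Cons.IH[OF xs] by blast
  qed
qed

lemma acc_E: "set xs \<subseteq> {..<n} \<Longrightarrow> prodlist (map E xs) \<in> (acc n xs :: (monom \<Rightarrow> 'k::field) set)"
proof (induction xs)
  case Nil then show ?case by (simp add: acc_Nil prodlist_Nil Sone_Sn)
next
  case (Cons i xs)
  then have i: "i < n" and xs: "set xs \<subseteq> {..<n}" by auto
  have "(E i :: monom \<Rightarrow> 'k) \<in> pp n i" unfolding pp_eq_Kid[OF i] by (rule E_Kid_same[OF i])
  then show ?case unfolding acc_Cons by (simp add: prodlist_Cons iprod_mem Cons.IH[OF xs])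
qed

lemma acc_prime:
  assumes P: "is_prime n P"
  shows "set xs \<subseteq> {..<n} \<Longrightarrow> acc n xs \<subseteq> P \<Longrightarrow> \<exists>i\<in>set xs. (Kid n i :: (monom \<Rightarrow> 'k::field) set) \<subseteq> P"
proof (induction xs)
  case Nil
  have "P \<subseteq> Sn n" "P \<noteq> Sn n" using P unfolding is_prime_def is_ideal_def by auto
  then show ?case using Nil.prems by (simp add: acc_Nil)
next
  case (Cons i xs)
  then have i: "i < n" and xs: "set xs \<subseteq> {..<n}" by auto
  have "pp n i \<subseteq> P \<or> acc n xs \<subseteq> P"
    using P Cons.prems(2) pp_ideal[OF i] acc_ideal[OF xs] unfolding is_prime_def acc_Cons by blast
  then show ?case
  proof
    assume "pp n i \<subseteq> P" then show ?thesis using pp_eq_Kid[OF i] by auto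
  next
    assume "acc n xs \<subseteq> P" then show ?thesis using Cons.IH[OF xs] by auto
  qed
qed

lemma pp_prod_acc: "pp_prod n = acc n [0..<n]"
  unfolding pp_prod_def acc_def by simp

lemma Efun_pp_prod: "(Efun n :: monom \<Rightarrow> 'k::field) \<in> pp_prod n"
  unfolding pp_prod_acc Efun_prodlist by (rule acc_E) auto

lemma pp_prod_ideal: "is_ideal n (pp_prod n :: (monom \<Rightarrow> 'k::field) set)"
  unfolding pp_prod_acc by (rule acc_ideal) auto

lemma Ftens_sub_pp_prod: "Ftens n \<subseteq> (pp_prod n :: (monom \<Rightarrow> 'k::field) set)"
  by (rule Ftens_sub_ideal[OF pp_prod_ideal Efun_pp_prod])

lemma pp_prod_sub_Kid: "i < n \<Longrightarrow> pp_prod n \<subseteq> (Kid n i :: (monom \<Rightarrow> 'k::field) set)"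
  unfolding pp_prod_acc by (rule acc_sub) auto

lemma Inter_sub_Ftens:
  assumes n: "n \<ge> 1"
  shows "(\<Inter>i<n. (Kid n i :: (monom \<Rightarrow> 'k::field) set)) \<subseteq> Ftens n"
proof
  fix f :: "monom \<Rightarrow> 'k" assume f: "f \<in> (\<Inter>i<n. Kid n i)"
  have "f \<in> Kid n 0" using f n by auto
  then have "f \<in> Sn n" by (rule KidD(1))
  then have "f \<in> {f \<in> Sn n. \<forall>i<n. f \<in> Kid n i}" using f by auto
  then show "f \<in> Ftens n" using Kint_sub_Ftens by blast
qed

lemma nonzero_prime_contains:
  assumes n: "n \<ge> 1" and P: "is_prime n P" and nz: "P \<noteq> {(\<lambda>_. 0 :: 'k::field)}"
  shows "\<exists>i<n. (Kid n i :: (monom \<Rightarrow> 'k) set) \<subseteq> P"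
proof -
  have I: "is_ideal n P" using P unfolding is_prime_def by auto
  have "(\<lambda>_. 0) \<in> P" using idealD(2)[OF I] .
  then obtain f where f: "f \<in> P" "f \<noteq> (\<lambda>_. 0)" using nz by blast
  have "Efun n \<in> P" by (rule Efun_in_ideal[OF I f])
  then have F: "Ftens n \<subseteq> P" by (rule Ftens_sub_ideal[OF I])
  have "pp_prod n \<subseteq> (\<Inter>i<n. (Kid n i :: (monom \<Rightarrow> 'k) set))" using pp_prod_sub_Kid by blast
  then have "pp_prod n \<subseteq> P" using Inter_sub_Ftens[OF n] F by blast
  then have a: "acc n [0..<n] \<subseteq> P" unfolding pp_prod_acc .
  have "\<exists>i\<in>set [0..<n]. (Kid n i :: (monom \<Rightarrow> 'k) set) \<subseteq> P"
    by (rule acc_prime[OF P _ a]) auto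
  then show ?thesis by auto
qed


definition chains :: "nat \<Rightarrow> (monom \<Rightarrow> 'k::field) set \<Rightarrow> nat set" where
  "chains n P = {k. \<exists>Q. Q 0 = P \<and> (\<forall>i\<le>k. is_prime n (Q i)) \<and> (\<forall>i<k. Q (Suc i) \<subset> Q i)}"

lemma height_chains: "height n P = (SUP k \<in> chains n P. enat k)"
  unfolding height_def chains_def by simp

lemma height_eq_1:
  assumes "1 \<in> chains n P" "\<forall>k\<in>chains n P. k \<le> 1"
  shows "height n P = 1"
proof (rule antisym)
  show "height n P \<le> 1" unfolding height_chains
    by (rule SUP_least) (use assms(2) in \<open>auto simp: one_enat_def\<close>)
  have "enat 1 \<le> (SUP k \<in> chains n P. enat k)" by (rule SUP_upper[OF assms(1)])
  then show "1 \<le> height n P" unfolding height_chains by (simp add: one_enat_def)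
qed

lemma height_ne_1_two:
  assumes "2 \<in> chains n P"
  shows "height n P \<noteq> 1"
proof -
  have "enat 2 \<le> (SUP k \<in> chains n P. enat k)" by (rule SUP_upper[OF assms])
  then show ?thesis unfolding height_chains by (auto simp: one_enat_def)
qed

lemma height_ne_1_zero:
  assumes "\<forall>k\<in>chains n P. k = 0"
  shows "height n P \<noteq> 1"
proof -
  have "(SUP k \<in> chains n P. enat k) \<le> 0" by (rule SUP_least) (use assms in \<open>auto simp: zero_enat_def\<close>)
  then show ?thesis unfolding height_chains by auto
qed

lemma prime_ideal: "is_prime n P \<Longrightarrow> is_ideal n P" unfolding is_prime_def by auto

lemma E_nonzero: "(E i :: monom \<Rightarrow> 'k::field) \<noteq> (\<lambda>_. 0)"
proof
  assume "(E i :: monom \<Rightarrow> 'k) = (\<lambda>_. 0)"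
  then have "(E i zm :: 'k) = 0" by simp
  moreover have "sing i 1 1 \<noteq> zm" unfolding sing_def by (auto simp: fun_eq_iff)
  ultimately show False unfolding E_eq emon_def by simp
qed

lemma sub_strict_nonzero:
  assumes Q2: "is_ideal n Q2" and s: "Q2 \<subset> Q1"
  shows "Q1 \<noteq> {(\<lambda>_. 0 :: 'k::field)}"
proof
  assume "Q1 = {(\<lambda>_. 0 :: 'k)}"
  moreover have "(\<lambda>_. 0) \<in> Q2" by (rule idealD(2)[OF Q2])
  ultimately show False using s by auto
qed

lemma height_Kid:
  assumes n: "n \<ge> 1" and i: "i < n"
  shows "height n (Kid n i :: (monom \<Rightarrow> 'k::field) set) = 1"
proof (rule height_eq_1)
  let ?Z = "{(\<lambda>_. 0 :: 'k)}"
  have zs: "?Z \<subset> Kid n i"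
  proof -
    have "(\<lambda>_. 0) \<in> (Kid n i :: (monom \<Rightarrow> 'k) set)" by (rule idealD(2)[OF Kid_ideal])
    moreover have "(E i :: monom \<Rightarrow> 'k) \<in> Kid n i" by (rule E_Kid_same[OF i])
    ultimately show ?thesis using E_nonzero[of i] by blast
  qed
  define Q where "Q = (\<lambda>t::nat. if t = 0 then (Kid n i :: (monom \<Rightarrow> 'k) set) else ?Z)"
  have "Q 0 = Kid n i \<and> (\<forall>t\<le>1. is_prime n (Q t)) \<and> (\<forall>t<1. Q (Suc t) \<subset> Q t)"
    unfolding Q_def using Kid_prime[OF i] zero_prime zs by (auto simp: le_Suc_eq)
  then show "1 \<in> chains n (Kid n i :: (monom \<Rightarrow> 'k) set)" unfolding chains_def by blast
  show "\<forall>k\<in>chains n (Kid n i :: (monom \<Rightarrow> 'k) set). k \<le> 1"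
  proof (rule ballI, rule ccontr)
    fix k assume "k \<in> chains n (Kid n i :: (monom \<Rightarrow> 'k) set)" and k: "\<not> k \<le> 1"
    then obtain Q :: "nat \<Rightarrow> (monom \<Rightarrow> 'k) set" where Q0: "Q 0 = Kid n i" and pr: "\<forall>t\<le>k. is_prime n (Q t)"
      and ch: "\<forall>t<k. Q (Suc t) \<subset> Q t" unfolding chains_def by blast
    have q1: "is_prime n (Q 1)" and q2: "is_prime n (Q 2)" using pr k by auto
    have s21: "Q 2 \<subset> Q 1" using ch k by (metis Suc_1 Suc_lessD not_le_imp_less)
    have s10: "Q 1 \<subset> Kid n i" using ch k Q0 by (metis One_nat_def not_le_imp_less zero_less_Suc less_trans)
    have "Q 1 \<noteq> {(\<lambda>_. 0)}" by (rule sub_strict_nonzero[OF prime_ideal[OF q2] s21])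
    then obtain j where j: "j < n" "Kid n j \<subseteq> Q 1" using nonzero_prime_contains[OF n q1] by blast
    show False
    proof (cases "j = i")
      case True then show False using j s10 by auto
    next
      case False
      then have "\<not> (Kid n j :: (monom \<Rightarrow> 'k) set) \<subseteq> Kid n i" by (intro Kid_incomp[OF j(1)]) simp
      then show False using j s10 by auto
    qed
  qed
qed

lemma height1_is_Kid:
  assumes n: "n \<ge> 1" and P: "is_prime n (P :: (monom \<Rightarrow> 'k::field) set)" and h: "height n P = 1"
  shows "\<exists>i<n. P = Kid n i"
proof -
  let ?Z = "{(\<lambda>_. 0 :: 'k)}"
  have PZ: "P \<noteq> ?Z"
  proof
    assume PZ: "P = ?Z"
    have "\<forall>k\<in>chains n P. k = 0"
    proof (rule ballI, rule ccontr)
      fix k assume "k \<in> chains n P" and k: "k \<noteq> 0"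
      then obtain Q :: "nat \<Rightarrow> (monom \<Rightarrow> 'k) set" where Q0: "Q 0 = P" and pr: "\<forall>t\<le>k. is_prime n (Q t)"
        and ch: "\<forall>t<k. Q (Suc t) \<subset> Q t" unfolding chains_def by blast
      have "is_prime n (Q 1)" using pr k by auto
      then have "(\<lambda>_. 0) \<in> Q 1" using idealD(2)[OF prime_ideal] by blast
      moreover have "Q 1 \<subset> Q 0" using ch k by auto
      ultimately show False using Q0 PZ by auto
    qed
    then show False using height_ne_1_zero h by blast
  qed
  obtain i where i: "i < n" "Kid n i \<subseteq> P" using nonzero_prime_contains[OF n P PZ] by blast
  show ?thesis
  proof (cases "P = Kid n i")
    case True then show ?thesis using i by blast
  next
    case False
    then have s1: "Kid n i \<subset> P" using i by auto
    have s2: "?Z \<subset> Kid n i"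
    proof -
      have "(\<lambda>_. 0) \<in> (Kid n i :: (monom \<Rightarrow> 'k) set)" by (rule idealD(2)[OF Kid_ideal])
      moreover have "(E i :: monom \<Rightarrow> 'k) \<in> Kid n i" by (rule E_Kid_same[OF i(1)])
      ultimately show ?thesis using E_nonzero[of i] by blast
    qed
    define Q where "Q = (\<lambda>t::nat. if t = 0 then P else if t = 1 then Kid n i else ?Z)"
    have "Q 0 = P \<and> (\<forall>t\<le>2. is_prime n (Q t)) \<and> (\<forall>t<2. Q (Suc t) \<subset> Q t)"
      unfolding Q_def using P Kid_prime[OF i(1)] zero_prime s1 s2
      by (auto simp: le_Suc_eq less_Suc_eq numeral_2_eq_2)
    then have "2 \<in> chains n P" unfolding chains_def by blast
    then show ?thesis using height_ne_1_two h by blast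
  qed
qed

theorem lemma4p2:
  fixes n :: nat
  assumes "n \<ge> 1"
  shows "{P :: (monom \<Rightarrow> 'k::field) set. is_prime n P \<and> height n P = 1} = {pp n i | i. i < n}
    \<and> inj_on (pp n :: nat \<Rightarrow> (monom \<Rightarrow> 'k::field) set) {..<n}
    \<and> (\<forall>i<n. \<forall>j<n. i \<noteq> j \<longrightarrow> \<not> (pp n i :: (monom \<Rightarrow> 'k::field) set) \<subseteq> pp n j)
    \<and> (\<Inter>i<n. (pp n i :: (monom \<Rightarrow> 'k::field) set)) = pp_prod n
    \<and> (pp_prod n :: (monom \<Rightarrow> 'k::field) set) = Ftens n"
proof (intro conjI)
  have n: "n \<ge> 1" by (rule assms)
  show "{P :: (monom \<Rightarrow> 'k::field) set. is_prime n P \<and> height n P = 1} = {pp n i | i. i < n}"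
  proof
    show "{P :: (monom \<Rightarrow> 'k) set. is_prime n P \<and> height n P = 1} \<subseteq> {pp n i | i. i < n}"
    proof
      fix P :: "(monom \<Rightarrow> 'k) set" assume "P \<in> {P. is_prime n P \<and> height n P = 1}"
      then obtain i where "i < n" "P = Kid n i" using height1_is_Kid[OF n] by blast
      then show "P \<in> {pp n i | i. i < n}" using pp_eq_Kid by blast
    qed
    show "{pp n i | i. i < n} \<subseteq> {P :: (monom \<Rightarrow> 'k) set. is_prime n P \<and> height n P = 1}"
    proof
      fix P :: "(monom \<Rightarrow> 'k) set" assume "P \<in> {pp n i | i. i < n}"
      then obtain i where i: "i < n" "P = pp n i" by blast
      then have "P = Kid n i" using pp_eq_Kid by blast
      then show "P \<in> {P. is_prime n P \<and> height n P = 1}" using Kid_prime[OF i(1)] height_Kid[OF n i(1)] by simp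
    qed
  qed
  show inc: "\<forall>i<n. \<forall>j<n. i \<noteq> j \<longrightarrow> \<not> (pp n i :: (monom \<Rightarrow> 'k::field) set) \<subseteq> pp n j"
  proof (intro allI impI)
    fix i j assume ij: "i < n" "j < n" "i \<noteq> j"
    show "\<not> (pp n i :: (monom \<Rightarrow> 'k) set) \<subseteq> pp n j"
      unfolding pp_eq_Kid[OF ij(1)] pp_eq_Kid[OF ij(2)] by (rule Kid_incomp[OF ij(1)]) (use ij(3) in auto)
  qed
  show "inj_on (pp n :: nat \<Rightarrow> (monom \<Rightarrow> 'k::field) set) {..<n}"
  proof (rule inj_onI)
    fix i j assume "i \<in> {..<n}" "j \<in> {..<n}" and e: "(pp n i :: (monom \<Rightarrow> 'k) set) = pp n j"
    then show "i = j" using inc by blast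
  qed
  have IK: "(\<Inter>i<n. (pp n i :: (monom \<Rightarrow> 'k::field) set)) = (\<Inter>i<n. Kid n i)"
    using pp_eq_Kid by (intro INF_cong) auto
  have a: "pp_prod n \<subseteq> (\<Inter>i<n. (Kid n i :: (monom \<Rightarrow> 'k) set))" using pp_prod_sub_Kid by blast
  have b: "(\<Inter>i<n. (Kid n i :: (monom \<Rightarrow> 'k) set)) \<subseteq> Ftens n" by (rule Inter_sub_Ftens[OF n])
  have c: "Ftens n \<subseteq> (pp_prod n :: (monom \<Rightarrow> 'k) set)" by (rule Ftens_sub_pp_prod)
  show "(\<Inter>i<n. (pp n i :: (monom \<Rightarrow> 'k::field) set)) = pp_prod n" unfolding IK using a b c by blast
  show "(pp_prod n :: (monom \<Rightarrow> 'k::field) set) = Ftens n" using a b c by blast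
qed


end
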